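(* Let $\bar\delta\ge1$ be an integer and $\pi$ the switching policy $(\bar\delta,0)$ (transmit in $(1,1,0)$, in every state $(0,1,\delta)$, $\delta\ge1$, and in $(1,0,\delta)$ for $\delta\ge\bar\delta$). Define $A=\frac{p\bar q^{\bar\delta-1}}{1-\bar qp_f}$, $a_1=\frac{p(1-\bar q^{\bar\delta-1})}{1-\bar q}+A$, $b_1=\frac{qp_f}{1-\bar pp_f}$, $B=\frac{q}{\bar p(1-\bar pp_f)}$, $D=(1+a_1)\bar pB+(1+b_1)\bar qA$. Then the stationary distribution of $\{S_t\}$ under $\pi$ is $\nu_{0,0,0}=\bar pB/D$, $\nu_{1,1,0}=\bar qA/D$, $\nu_{1,0,k}=p\bar q^{k-1}\nu_{0,0,0}$ for $1\le k\le\bar\delta$ and $\nu_{1,0,k}=p\bar q^{\bar\delta-1}(\bar qp_f)^{k-\bar\delta}\nu_{0,0,0}$ for $k>\bar\delta$, $\nu_{0,1,k}=qp_f(\bar pp_f)^{k-1}\nu_{1,1,0}$ for $k\ge1$. Moreover, $$\mathcal L(\pi)=\beta p\,\psi(\bar q,\bar\delta)\,\nu_{0,0,0}+\frac{(1-\beta)qp_f\nu_{1,1,0}}{(1-\bar pp_f)^2}+\lambda\big(A\nu_{0,0,0}+(1+b_1)\nu_{1,1,0}\big),$$ where $\psi(x,y)=\frac{1-(x+(1-x)y)x^{y-1}}{(1-x)^2}+\frac{(xp_f+(1-xp_f)y)x^{y-1}}{(1-xp_f)^2}$.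
   Context: Fix $p,q\in(0,1)$, $\bar p=1-p$, $\bar q=1-q$. The source $\{X_t\}$ is a Markov chain on $\{0,1\}$ with $\Pr[X_{t+1}=1\mid X_t=0]=p$, $\Pr[X_{t+1}=0\mid X_t=1]=q$; channel i.i.d. Bernoulli with success probability $p_s\in(0,1]$, independent of the source, $p_f=1-p_s$. Estimate dynamics: if $A_t=1$ and the transmission succeeds then $\hat X_{t+1}=X_{t+1}$, otherwise $\hat X_{t+1}=\hat X_t$. Age: $\Delta_{t+1}=\Delta_t+1$ if $X_{t+1}\ne\hat X_{t+1}$, else $0$. State $S_t=(X_t,\hat X_t,\Delta_t)\in\mathcal S=\{(0,0,0),(1,1,0)\}\cup\{(1,0,\delta),(0,1,\delta):\delta\ge1\}$, $S_1=(0,0,0)$; $\nu_{i,j,\delta}$ is the stationary probability of $(i,j,\delta)$. Per-state cost $c(s)=\beta\delta$ for $s=(1,0,\delta)$, $(1-\beta)\delta$ for $s=(0,1,\delta)$, $0$ for synced states, $\beta\in[0,1]$; per-stage cost $\ell(s,a)=\mathbb E[c(S_{t+1})\mid S_t=s,A_t=a]+\lambda\mathbb 1\{a=1\}$, $\lambda\ge0$; average cost $\mathcal L(\pi)=\limsup_{T\to\infty}\frac1T\sum_{t=1}^T\mathbb E^\pi[\ell(S_t,A_t)\mid S_1=(0,0,0)]$. The switching policy $(\bar\delta,\underline\delta)$ ($\bar\delta,\underline\delta\ge0$ integers) transmits iff $S_t=(1,0,\delta)$ with $\delta\ge\bar\delta$, or $S_t=(0,1,\delta)$ with $\delta\ge\underline\delta$,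 or ($\bar\delta=0$ and $S_t=(0,0,0)$), or ($\underline\delta=0$ and $S_t=(1,1,0)$). *)

theory Defs
  imports "HOL-Probability.Probability"
begin

text \<open>States are triples (x, xhat, delta) with x, xhat in {0,1} encoded as naturals.\<close>
type_synonym st = "nat \<times> nat \<times> nat"

definition state_space :: "st set" where
  "state_space = {(0,0,0), (1,1,0)} \<union> {(1,0,d) | d. d \<ge> 1} \<union> {(0,1,d) | d. d \<ge> 1}"

definition src_step :: "real \<Rightarrow> real \<Rightarrow> nat \<Rightarrow> nat pmf" where
  "src_step p q x = (if x = 0
      then map_pmf (\<lambda>b. if b then 1 else 0) (bernoulli_pmf p)
      else map_pmf (\<lambda>b. if b then 0 else 1) (bernoulli_pmf q))"

text \<open>Transition kernel of S_t given action a (True = transmit); channel success prob ps.\<close>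
definition kernel :: "real \<Rightarrow> real \<Rightarrow> real \<Rightarrow> st \<Rightarrow> bool \<Rightarrow> st pmf" where
  "kernel p q ps s a = (case s of (x, xh, d) \<Rightarrow>
      bind_pmf (src_step p q x) (\<lambda>x'.
      bind_pmf (bernoulli_pmf ps) (\<lambda>succ.
        let xh' = (if a \<and> succ then x' else xh)
        in return_pmf (x', xh', if x' \<noteq> xh' then d + 1 else 0))))"

definition switching_policy :: "nat \<Rightarrow> nat \<Rightarrow> st \<Rightarrow> bool" where
  "switching_policy dbar dlow s = (case s of (x, xh, d) \<Rightarrow>
      (x = 1 \<and> xh = 0 \<and> d \<ge> dbar) \<or> (x = 0 \<and> xh = 1 \<and> d \<ge> dlow)
      \<or> (dbar = 0 \<and> s = (0,0,0)) \<or> (dlow = 0 \<and> s = (1,1,0)))"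

definition state_cost :: "real \<Rightarrow> st \<Rightarrow> real" where
  "state_cost \<beta> s = (case s of (x, xh, d) \<Rightarrow>
      if x = 1 \<and> xh = 0 then \<beta> * real d
      else if x = 0 \<and> xh = 1 then (1 - \<beta>) * real d else 0)"

definition stage_cost :: "real \<Rightarrow> real \<Rightarrow> real \<Rightarrow> real \<Rightarrow> real \<Rightarrow> st \<Rightarrow> bool \<Rightarrow> real" where
  "stage_cost p q ps \<beta> lam s a =
     measure_pmf.expectation (kernel p q ps s a) (state_cost \<beta>) + lam * (if a then 1 else 0)"

text \<open>Distribution of S_{n+1} under a stationary deterministic policy pi, with S_1 = (0,0,0).\<close>
definition state_dist :: "real \<Rightarrow> real \<Rightarrow> real \<Rightarrow> (st \<Rightarrow> bool) \<Rightarrow> nat \<Rightarrow> st pmf" where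
  "state_dist p q ps \<pi> n =
     ((\<lambda>\<mu>. bind_pmf \<mu> (\<lambda>s. kernel p q ps s (\<pi> s))) ^^ n) (return_pmf (0,0,0))"

definition avg_cost :: "real \<Rightarrow> real \<Rightarrow> real \<Rightarrow> real \<Rightarrow> real \<Rightarrow> (st \<Rightarrow> bool) \<Rightarrow> ereal" where
  "avg_cost p q ps \<beta> lam \<pi> = limsup (\<lambda>T. ereal ((1 / real T) *
      (\<Sum>t = 1..T. measure_pmf.expectation (state_dist p q ps \<pi> (t - 1))
                     (\<lambda>s. stage_cost p q ps \<beta> lam s (\<pi> s)))))"

definition is_stationary :: "real \<Rightarrow> real \<Rightarrow> real \<Rightarrow> (st \<Rightarrow> bool) \<Rightarrow> st pmf \<Rightarrow> bool" where
  "is_stationary p q ps \<pi> \<mu> \<longleftrightarrow> set_pmf \<mu> \<subseteq> state_space \<and>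
     bind_pmf \<mu> (\<lambda>s. kernel p q ps s (\<pi> s)) = \<mu>"

definition psi :: "real \<Rightarrow> real \<Rightarrow> nat \<Rightarrow> real" where
  "psi pf x y = (1 - (x + (1 - x) * real y) * x ^ (y - 1)) / (1 - x)^2
      + (x * pf + (1 - x * pf) * real y) * x ^ (y - 1) / (1 - x * pf)^2"

end

theory Submission
  imports Defs
begin

lemma bern2_expect:
  fixes f :: "'a \<Rightarrow> real"
  assumes "0 \<le> r" "r \<le> 1" "0 \<le> ps" "ps \<le> 1"
  shows "measure_pmf.expectation (bind_pmf (bernoulli_pmf r) (\<lambda>b. bind_pmf (bernoulli_pmf ps) (\<lambda>s. return_pmf (g b s)))) f
     = r * (ps * f (g True True) + (1-ps) * f (g True False)) + (1-r) * (ps * f (g False True) + (1-ps) * f (g False False))"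
proof -
  have inner: "measure_pmf.expectation (bind_pmf (bernoulli_pmf ps) (\<lambda>succ. return_pmf (h succ))) f
      = ps * f (h True) + (1-ps) * f (h False)" for h :: "bool \<Rightarrow> 'a"
    by (subst pmf_expectation_bind[where A=UNIV]) (auto simp: UNIV_bool assms)
  show ?thesis
    by (subst pmf_expectation_bind[where A=UNIV]) (auto simp: UNIV_bool assms inner)
qed

lemma kernel_expect:
  fixes f :: "st \<Rightarrow> real"
  assumes "0 \<le> p" "p \<le> 1" "0 \<le> q" "q \<le> 1" "0 \<le> ps" "ps \<le> 1"
  shows "measure_pmf.expectation (kernel p q ps (x,xh,d) a) f =
     (if x = 0 then p else 1 - q) *
        (ps * f (1, (if a then 1 else xh), if 1 \<noteq> (if a then 1 else xh) then d+1 else 0)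
         + (1-ps) * f (1, xh, if 1 \<noteq> xh then d+1 else 0))
   + (if x = 0 then 1 - p else q) *
        (ps * f (0, (if a then 0 else xh), if 0 \<noteq> (if a then 0 else xh) then d+1 else 0)
         + (1-ps) * f (0, xh, if 0 \<noteq> xh then d+1 else 0))"
proof (cases "x = 0")
  case True
  show ?thesis unfolding kernel_def src_step_def using True
    apply (simp only: bind_map_pmf Let_def if_True simp_thms split)
    apply (subst bern2_expect)
    using assms apply (simp_all (no_asm_simp))
    done
next
  case False
  show ?thesis unfolding kernel_def src_step_def using False
    apply (simp only: bind_map_pmf Let_def if_False simp_thms split)
    apply (subst bern2_expect)
    using assms apply (simp_all (no_asm_simp))
    done
qed

lemma src_set: "set_pmf (src_step p q x) \<subseteq> {0,1}"
  unfolding src_step_def by auto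
lemma kernel_set:
  "set_pmf (kernel p q ps (x,xh,d) a) \<subseteq>
    (\<lambda>(x', succ). (x', if a \<and> succ then x' else xh, if x' \<noteq> (if a \<and> succ then x' else xh) then d+1 else 0)) ` ({0,1} \<times> UNIV)"
proof
  fix t assume "t \<in> set_pmf (kernel p q ps (x,xh,d) a)"
  then obtain x' succ where x': "x' \<in> set_pmf (src_step p q x)"
    and t: "t = (x', if a \<and> succ then x' else xh, if x' \<noteq> (if a \<and> succ then x' else xh) then d+1 else 0)"
    unfolding kernel_def Let_def by auto
  have "x' \<in> {0,1}" using x' src_set by blast
  then show "t \<in> (\<lambda>(x', succ). (x', if a \<and> succ then x' else xh, if x' \<noteq> (if a \<and> succ then x' else xh) then d+1 else 0)) ` ({0,1} \<times> UNIV)"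
    unfolding t by (intro image_eqI[where x="(x',succ)"]) auto
qed
lemma kernel_finite: "finite (set_pmf (kernel p q ps s a))"
proof -
  obtain x xh d where s: "s = (x,xh,d)" by (cases s) auto
  show ?thesis unfolding s by (rule finite_subset[OF kernel_set]) auto
qed

lemma pmf_as_expect: "pmf M t = measure_pmf.expectation M (indicator {t})"
  by (simp add: measure_pmf_single)

lemma int_cong_on:
  fixes f g :: "'a \<Rightarrow> real"
  assumes "set_pmf M \<subseteq> S" "\<And>s. s \<in> S \<Longrightarrow> f s = g s"
  shows "measure_pmf.expectation M f = measure_pmf.expectation M g"
  using assms by (intro integral_cong_AE) (auto simp: AE_measure_pmf_iff)

lemma int_ind:
  fixes a b c :: real
  shows "measure_pmf.expectation M (\<lambda>s. a * indicator A s + b * indicator B s + c * indicator C s)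
     = a * measure_pmf.prob M A + b * measure_pmf.prob M B + c * measure_pmf.prob M C"
proof -
  have i: "integrable (measure_pmf M) (\<lambda>s. x * indicator Y s)" for x :: real and Y
    by (intro integrable_mult_right measure_pmf.integrable_const_bound[where B=1]) (auto split: split_indicator)
  have "measure_pmf.expectation M (\<lambda>s. a * indicator A s + b * indicator B s + c * indicator C s)
    = measure_pmf.expectation M (\<lambda>s. a * indicator A s + b * indicator B s) + measure_pmf.expectation M (\<lambda>s. c * indicator C s)"
    by (intro Bochner_Integration.integral_add Bochner_Integration.integrable_add i)
  also have "measure_pmf.expectation M (\<lambda>s. a * indicator A s + b * indicator B s) = 
     measure_pmf.expectation M (\<lambda>s. a * indicator A s) + measure_pmf.expectation M (\<lambda>s. b * indicator B s)"
    by (intro Bochner_Integration.integral_add i)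
  finally show ?thesis by simp
qed

lemma sums_pmf:
  assumes "inj h"
  shows "(\<lambda>k. pmf M (h k)) sums measure_pmf.prob M (range h)"
proof -
  have "(\<lambda>k. measure_pmf.prob M {h k}) sums measure_pmf.prob M (\<Union>k. {h k})"
    by (rule measure_UNION) (auto simp: disjoint_family_on_def assms inj_eq measure_pmf.emeasure_finite)
  moreover have "(\<Union>k. {h k}) = range h" by auto
  ultimately show ?thesis by (simp add: measure_pmf_single)
qed

locale M =
  fixes p q ps :: real and dbar :: nat
  assumes p0: "0 < p" and p1: "p < 1" and q0: "0 < q" and q1: "q < 1"
    and ps0: "0 < ps" and ps1: "ps \<le> 1" and d1: "1 \<le> dbar"
begin

abbreviation "pf \<equiv> 1 - ps"
abbreviation "pb \<equiv> 1 - p"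
abbreviation "qb \<equiv> 1 - q"
abbreviation "pol \<equiv> switching_policy dbar 0"
abbreviation "K s \<equiv> kernel p q ps s (pol s)"

lemma pos: "0 < pb" "0 < qb" "0 \<le> pf" "pf < 1" "0 < 1 - pb * pf" "0 < 1 - qb * pf"
   "pb * pf < 1" "qb * pf < 1" "0 \<le> pb * pf" "0 \<le> qb * pf"
proof -
  have a: "pb * pf \<le> pb" using p0 p1 ps0 ps1 by (simp add: mult_left_le)
  have b: "qb * pf \<le> qb" using q0 q1 ps0 ps1 by (simp add: mult_left_le)
  show "0 < pb" "0 < qb" "0 \<le> pf" "pf < 1" using p0 p1 q0 q1 ps0 ps1 by auto
  show "0 < 1 - pb * pf" "0 < 1 - qb * pf" "pb * pf < 1" "qb * pf < 1"
    using a b p0 q0 by auto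
  show "0 \<le> pb * pf" "0 \<le> qb * pf" using p1 q1 ps1 by auto
qed

lemma EK: "measure_pmf.expectation (kernel p q ps (x,xh,d) a) f =
     (if x = 0 then p else 1 - q) *
        (ps * f (1, (if a then 1 else xh), if 1 \<noteq> (if a then 1 else xh) then d+1 else 0)
         + (1-ps) * f (1, xh, if 1 \<noteq> xh then d+1 else 0))
   + (if x = 0 then 1 - p else q) *
        (ps * f (0, (if a then 0 else xh), if 0 \<noteq> (if a then 0 else xh) then d+1 else 0)
         + (1-ps) * f (0, xh, if 0 \<noteq> xh then d+1 else 0))"
  by (rule kernel_expect) (use p0 p1 q0 q1 ps0 ps1 in auto)

lemma EK000: "measure_pmf.expectation (K (0,0,0)) f = p * f (1,0,1) + pb * f (0,0,0)"
  using d1 by (simp add: EK switching_policy_def algebra_simps)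

lemma EK110: "measure_pmf.expectation (K (1,1,0)) f = qb * f (1,1,0) + q * ps * f (0,0,0) + q * pf * f (0,1,1)"
  by (simp add: EK switching_policy_def algebra_simps)

lemma EK10lo: "d < dbar \<Longrightarrow> measure_pmf.expectation (K (1,0,d)) f = qb * f (1,0,d+1) + q * f (0,0,0)"
  by (simp add: EK switching_policy_def algebra_simps)

lemma EK10hi: "dbar \<le> d \<Longrightarrow> measure_pmf.expectation (K (1,0,d)) f = qb * (ps * f (1,1,0) + pf * f (1,0,d+1)) + q * f (0,0,0)"
  by (simp add: EK switching_policy_def algebra_simps)

lemma EK01: "measure_pmf.expectation (K (0,1,d)) f = p * f (1,1,0) + pb * (ps * f (0,0,0) + pf * f (0,1,d+1))"
  by (simp add: EK switching_policy_def algebra_simps)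

lemma SS_cases:
  assumes "s \<in> state_space"
  obtains "s = (0,0,0)" | "s = (1,1,0)" | d where "s = (1,0,d)" "1 \<le> d" | d where "s = (0,1,d)" "1 \<le> d"
  using assms unfolding state_space_def by auto

lemma K_set: "s \<in> state_space \<Longrightarrow> set_pmf (K s) \<subseteq> state_space"
proof -
  assume "s \<in> state_space"
  then obtain x xh d where s: "s = (x,xh,d)" "s \<in> state_space" by (cases s) auto
  show ?thesis
    using kernel_set[of p q ps x xh d "pol s"] s(2) d1
    unfolding s(1) by (auto simp: state_space_def switching_policy_def split: if_splits)
qed

end

context M begin

definition "Fin = (\<lambda>k. (1::nat,0::nat,k)) ` {1..<dbar}"
definition "R10 = range (\<lambda>k. (1::nat,0::nat,k+dbar))"
definition "R01 = range (\<lambda>k. (0::nat,1::nat,Suc k))"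

lemma SS_part: "state_space = {(0,0,0)} \<union> {(1,1,0)} \<union> Fin \<union> R10 \<union> R01"
proof (intro equalityI subsetI)
  fix s assume "s \<in> state_space"
  then show "s \<in> {(0,0,0)} \<union> {(1,1,0)} \<union> Fin \<union> R10 \<union> R01"
  proof (cases rule: SS_cases)
    case (3 d)
    show ?thesis
    proof (cases "d < dbar")
      case True then show ?thesis using 3 by (auto simp: Fin_def)
    next
      case False
      then have "s = (\<lambda>k. (1,0,k+dbar)) (d - dbar)" using 3 by simp
      then show ?thesis unfolding R10_def by blast
    qed
  next
    case (4 d)
    then have "s = (\<lambda>k. (0,1,Suc k)) (d - 1)" by simp
    then show ?thesis unfolding R01_def by blast
  qed auto
next
  fix s assume "s \<in> {(0,0,0)} \<union> {(1,1,0)} \<union> Fin \<union> R10 \<union> R01"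
  then show "s \<in> state_space" using d1 by (auto simp: Fin_def R10_def R01_def state_space_def)
qed

definition Gf :: "(st \<Rightarrow> real) \<Rightarrow> st \<Rightarrow> real" where
"Gf f s = (case s of (x,xh,d) \<Rightarrow> if x = 0 \<and> xh = 0 then p * f (1,0,1) + pb * f (0,0,0)
  else if x = 1 \<and> xh = 1 then qb * f (1,1,0) + q * ps * f (0,0,0) + q * pf * f (0,1,1)
  else if x = 1 \<and> xh = 0 then (if d < dbar then qb * f (1,0,d+1) + q * f (0,0,0)
        else qb * (ps * f (1,1,0) + pf * f (1,0,d+1)) + q * f (0,0,0))
  else p * f (1,1,0) + pb * (ps * f (0,0,0) + pf * f (0,1,d+1)))"

lemma EKg: assumes "s \<in> state_space" shows "measure_pmf.expectation (K s) f = Gf f s"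
  using assms
proof (cases rule: SS_cases)
  case 1 show ?thesis unfolding 1 EK000 Gf_def by simp
next
  case 2 show ?thesis unfolding 2 EK110 Gf_def by simp
next
  case (3 d)
  show ?thesis
  proof (cases "d < dbar")
    case True show ?thesis unfolding 3 EK10lo[OF True] Gf_def using True by simp
  next
    case False then have "dbar \<le> d" by simp
    show ?thesis unfolding 3 EK10hi[OF \<open>dbar \<le> d\<close>] Gf_def using False by simp
  qed
next
  case (4 d) show ?thesis unfolding 4 EK01 Gf_def by simp
qed

lemma pmfK: "s \<in> state_space \<Longrightarrow> pmf (K s) t = Gf (indicator {t}) s"
  using EKg[of s "indicator {t}"] by (simp add: pmf_as_expect del: integral_indicator)

lemma decomp:
  assumes "set_pmf \<mu> \<subseteq> state_space"
  shows "1 = pmf \<mu> (0,0,0) + pmf \<mu> (1,1,0) + (\<Sum>k\<in>{1..<dbar}. pmf \<mu> (1,0,k))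
     + (\<Sum>k. pmf \<mu> (1,0,k+dbar)) + (\<Sum>k. pmf \<mu> (0,1,Suc k))"
proof -
  have u: "\<And>X Y. X \<inter> Y = {} \<Longrightarrow> measure_pmf.prob \<mu> (X \<union> Y) = measure_pmf.prob \<mu> X + measure_pmf.prob \<mu> Y"
    by (rule measure_pmf.finite_measure_Union) auto
  have di: "({(0,0,0)} :: st set) \<inter> {(1,1,0)} = {}" "({(0,0,0)} \<union> {(1,1,0)}) \<inter> Fin = {}"
     "(({(0,0,0)} :: st set) \<union> {(1,1,0)} \<union> Fin) \<inter> R10 = {}" "(({(0,0,0)} :: st set) \<union> {(1,1,0)} \<union> Fin \<union> R10) \<inter> R01 = {}"
    by (auto simp: Fin_def R10_def R01_def)
  have "measure_pmf.prob \<mu> state_space = 1"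
    using assms by (subst measure_pmf.prob_eq_1) (auto simp: AE_measure_pmf_iff)
  also have "state_space = {(0,0,0)} \<union> {(1,1,0)} \<union> Fin \<union> R10 \<union> R01" by (rule SS_part)
  also have "measure_pmf.prob \<mu> ({(0,0,0)} \<union> {(1,1,0)} \<union> Fin \<union> R10 \<union> R01)
     = measure_pmf.prob \<mu> {(0,0,0)} + measure_pmf.prob \<mu> {(1,1,0)} + measure_pmf.prob \<mu> Fin
       + measure_pmf.prob \<mu> R10 + measure_pmf.prob \<mu> R01"
    by (simp only: u di)
  also have "measure_pmf.prob \<mu> Fin = (\<Sum>k\<in>{1..<dbar}. pmf \<mu> (1,0,k))"
    unfolding Fin_def by (subst measure_measure_pmf_finite) (auto simp: sum.reindex inj_on_def)
  also have "measure_pmf.prob \<mu> R10 = (\<Sum>k. pmf \<mu> (1,0,k+dbar))"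
    unfolding R10_def by (rule sums_unique[OF sums_pmf]) (auto simp: inj_def)
  also have "measure_pmf.prob \<mu> R01 = (\<Sum>k. pmf \<mu> (0,1,Suc k))"
    unfolding R01_def by (rule sums_unique[OF sums_pmf]) (auto simp: inj_def)
  finally show ?thesis by (simp add: measure_pmf_single)
qed

lemma bal:
  assumes "set_pmf \<mu> \<subseteq> state_space"
    and "\<And>s. s \<in> state_space \<Longrightarrow> Gf (indicator {t}) s = a * indicator A s + b * indicator B s + c * indicator C s"
  shows "pmf (bind_pmf \<mu> K) t = a * measure_pmf.prob \<mu> A + b * measure_pmf.prob \<mu> B + c * measure_pmf.prob \<mu> C"
proof -
  have "pmf (bind_pmf \<mu> K) t = measure_pmf.expectation \<mu> (\<lambda>s. pmf (K s) t)" by (rule pmf_bind)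
  also have "\<dots> = measure_pmf.expectation \<mu> (\<lambda>s. a * indicator A s + b * indicator B s + c * indicator C s)"
    by (rule int_cong_on[OF assms(1)]) (simp add: pmfK assms(2))
  finally show ?thesis by (simp only: int_ind)
qed

lemma bind_SS: assumes "set_pmf \<mu> \<subseteq> state_space" shows "set_pmf (bind_pmf \<mu> K) \<subseteq> state_space"
proof
  fix u assume "u \<in> set_pmf (bind_pmf \<mu> K)"
  then obtain s where "s \<in> set_pmf \<mu>" "u \<in> set_pmf (K s)" by auto
  then show "u \<in> state_space" using assms K_set by blast
qed

lemma bal_101: assumes "set_pmf \<mu> \<subseteq> state_space" shows "pmf (bind_pmf \<mu> K) (1,0,1) = p * pmf \<mu> (0,0,0)"
proof -
  have "pmf (bind_pmf \<mu> K) (1,0,1) = p * measure_pmf.prob \<mu> {(0,0,0)} + 0 * measure_pmf.prob \<mu> {} + 0 * measure_pmf.prob \<mu> {}"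
    by (rule bal[OF assms]) (auto simp: Gf_def indicator_def One_nat_def elim!: SS_cases split: if_splits)
  then show ?thesis by (simp add: measure_pmf_single)
qed

lemma bal_10S: assumes "set_pmf \<mu> \<subseteq> state_space" "1 \<le> k" shows
   "pmf (bind_pmf \<mu> K) (1,0,Suc k) = (if k < dbar then qb else qb * pf) * pmf \<mu> (1,0,k)"
proof -
  have "pmf (bind_pmf \<mu> K) (1,0,Suc k) = (if k < dbar then qb else qb * pf) * measure_pmf.prob \<mu> {(1,0,k)} + 0 * measure_pmf.prob \<mu> {} + 0 * measure_pmf.prob \<mu> {}"
    by (rule bal[OF assms(1)]) (use assms(2) in \<open>auto simp: Gf_def indicator_def One_nat_def elim!: SS_cases split: if_splits\<close>)
  then show ?thesis by (simp add: measure_pmf_single)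
qed

lemma bal_011: assumes "set_pmf \<mu> \<subseteq> state_space" shows "pmf (bind_pmf \<mu> K) (0,1,1) = q * pf * pmf \<mu> (1,1,0)"
proof -
  have "pmf (bind_pmf \<mu> K) (0,1,1) = q * pf * measure_pmf.prob \<mu> {(1,1,0)} + 0 * measure_pmf.prob \<mu> {} + 0 * measure_pmf.prob \<mu> {}"
    by (rule bal[OF assms]) (auto simp: Gf_def indicator_def One_nat_def elim!: SS_cases split: if_splits)
  then show ?thesis by (simp add: measure_pmf_single)
qed

lemma bal_01S: assumes "set_pmf \<mu> \<subseteq> state_space" "1 \<le> k" shows
   "pmf (bind_pmf \<mu> K) (0,1,Suc k) = pb * pf * pmf \<mu> (0,1,k)"
proof -
  have "pmf (bind_pmf \<mu> K) (0,1,Suc k) = pb * pf * measure_pmf.prob \<mu> {(0,1,k)} + 0 * measure_pmf.prob \<mu> {} + 0 * measure_pmf.prob \<mu> {}"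
    by (rule bal[OF assms(1)]) (use assms(2) in \<open>auto simp: Gf_def indicator_def One_nat_def elim!: SS_cases split: if_splits\<close>)
  then show ?thesis by (simp add: measure_pmf_single)
qed

lemma bal_110: assumes "set_pmf \<mu> \<subseteq> state_space" shows
   "pmf (bind_pmf \<mu> K) (1,1,0) = qb * pmf \<mu> (1,1,0) + qb * ps * measure_pmf.prob \<mu> R10 + p * measure_pmf.prob \<mu> R01"
proof -
  have r10: "(Suc 0,0,d) \<in> R10 \<longleftrightarrow> dbar \<le> d" for d
  proof
    assume "dbar \<le> d" then have "(1::nat,0::nat,d) = (\<lambda>k. (1,0,k+dbar)) (d - dbar)" by simp
    then show "(Suc 0,0,d) \<in> R10" unfolding R10_def by simp
  qed (auto simp: R10_def)
  have r01: "(0,Suc 0,d) \<in> R01 \<longleftrightarrow> 1 \<le> d" for d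
  proof
    assume "1 \<le> d" then have "(0::nat,1::nat,d) = (\<lambda>k. (0,1,Suc k)) (d - 1)" by simp
    then show "(0,Suc 0,d) \<in> R01" unfolding R01_def by simp
  qed (auto simp: R01_def)
  have n: "(0,0,0) \<notin> R10" "(Suc 0,Suc 0,0) \<notin> R10" "(0,Suc 0,d) \<notin> R10" "(0,0,0) \<notin> R01" "(Suc 0,Suc 0,0) \<notin> R01" "(Suc 0,0,d) \<notin> R01" for d
    by (auto simp: R10_def R01_def)
  have "pmf (bind_pmf \<mu> K) (1,1,0) = qb * measure_pmf.prob \<mu> {(1,1,0)} + qb * ps * measure_pmf.prob \<mu> R10 + p * measure_pmf.prob \<mu> R01"
  proof (rule bal[OF assms])
    fix s assume "s \<in> state_space"
    then show "Gf (indicator {(1,1,0)}) s = qb * indicator {(1,1,0)} s + qb * ps * indicator R10 s + p * indicator R01 s"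
      by (cases rule: SS_cases) (auto simp: Gf_def r10 r01 n indicator_def One_nat_def split: if_splits)
  qed
  then show ?thesis by (simp add: measure_pmf_single)
qed

end

context M begin

lemma memb:
  "(0,0,0) \<notin> Fin" "(1,1,0) \<notin> Fin" "(0,0,0) \<notin> R10" "(1,1,0) \<notin> R10" "(0,0,0) \<notin> R01" "(1,1,0) \<notin> R01"
  "x \<in> Fin \<Longrightarrow> x \<notin> R10" "x \<in> Fin \<Longrightarrow> x \<notin> R01" "x \<in> R10 \<Longrightarrow> x \<notin> R01"
  by (auto simp: Fin_def R10_def R01_def)

lemma nn_range:
  fixes f :: "st \<Rightarrow> real" and h :: "nat \<Rightarrow> st"
  assumes "inj h" "\<And>x. 0 \<le> f x" "summable (\<lambda>k. f (h k))"
  shows "(\<integral>\<^sup>+x. ennreal (f x) * indicator (range h) x \<partial>count_space UNIV) = ennreal (\<Sum>k. f (h k))"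
proof -
  have "(\<integral>\<^sup>+x. ennreal (f x) * indicator (range h) x \<partial>count_space UNIV) = (\<integral>\<^sup>+x. ennreal (f x) \<partial>count_space (range h))"
    by (rule nn_integral_count_space_indicator[symmetric]) simp
  also have "\<dots> = (\<integral>\<^sup>+k. ennreal (f (h k)) \<partial>count_space UNIV)"
    by (rule nn_integral_bij_count_space[symmetric]) (use assms(1) in \<open>simp add: bij_betw_def\<close>)
  also have "\<dots> = (\<Sum>k. ennreal (f (h k)))" by (rule nn_integral_count_space_nat)
  also have "\<dots> = ennreal (\<Sum>k. f (h k))" by (rule suminf_ennreal2) (use assms in auto)
  finally show ?thesis .
qed

lemma nn_sum:
  fixes f :: "st \<Rightarrow> real"
  assumes nn: "\<And>x. 0 \<le> f x" and out: "\<And>s. s \<notin> state_space \<Longrightarrow> f s = 0"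
    and s1: "summable (\<lambda>k. f (1,0,k+dbar))" and s2: "summable (\<lambda>k. f (0,1,Suc k))"
  shows "(\<integral>\<^sup>+x. ennreal (f x) \<partial>count_space UNIV) = ennreal (f (0,0,0) + f (1,1,0) + (\<Sum>k\<in>{1..<dbar}. f (1,0,k))
      + (\<Sum>k. f (1,0,k+dbar)) + (\<Sum>k. f (0,1,Suc k)))"
proof -
  let ?F = "\<lambda>x. ennreal (f x)"
  have pt: "?F x = ?F x * indicator {(0,0,0)} x + ?F x * indicator {(1,1,0)} x + ?F x * indicator Fin x
      + ?F x * indicator R10 x + ?F x * indicator R01 x" for x
  proof (cases "x \<in> state_space")
    case True
    then have "x \<in> {(0,0,0)} \<union> {(1,1,0)} \<union> Fin \<union> R10 \<union> R01" using SS_part by simp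
    then show ?thesis using memb by (auto simp: indicator_def)
  next
    case False then show ?thesis using out by simp
  qed
  have "(\<integral>\<^sup>+x. ?F x \<partial>count_space UNIV) = (\<integral>\<^sup>+x. ?F x * indicator {(0,0,0)} x + ?F x * indicator {(1,1,0)} x + ?F x * indicator Fin x
      + ?F x * indicator R10 x + ?F x * indicator R01 x \<partial>count_space UNIV)"
    by (subst pt) (rule refl)
  also have "\<dots> = (\<integral>\<^sup>+x. ?F x * indicator {(0,0,0)} x \<partial>count_space UNIV) + (\<integral>\<^sup>+x. ?F x * indicator {(1,1,0)} x \<partial>count_space UNIV)
      + (\<integral>\<^sup>+x. ?F x * indicator Fin x \<partial>count_space UNIV) + (\<integral>\<^sup>+x. ?F x * indicator R10 x \<partial>count_space UNIV)
      + (\<integral>\<^sup>+x. ?F x * indicator R01 x \<partial>count_space UNIV)"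
    by (simp add: nn_integral_add)
  also have "(\<integral>\<^sup>+x. ?F x * indicator {(0,0,0)} x \<partial>count_space UNIV) = ennreal (f (0,0,0))" by simp
  also have "(\<integral>\<^sup>+x. ?F x * indicator {(1,1,0)} x \<partial>count_space UNIV) = ennreal (f (1,1,0))" by simp
  also have "(\<integral>\<^sup>+x. ?F x * indicator Fin x \<partial>count_space UNIV) = ennreal (\<Sum>k\<in>{1..<dbar}. f (1,0,k))"
  proof -
    have "(\<integral>\<^sup>+x. ?F x * indicator Fin x \<partial>count_space UNIV) = (\<Sum>x\<in>Fin. ?F x * emeasure (count_space UNIV) {x})"
      by (rule nn_integral_indicator_finite) (auto simp: Fin_def)
    also have "\<dots> = (\<Sum>x\<in>Fin. ?F x)" by simp
    also have "\<dots> = ennreal (\<Sum>x\<in>Fin. f x)" using nn by simp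
    also have "(\<Sum>x\<in>Fin. f x) = (\<Sum>k\<in>{1..<dbar}. f (1,0,k))"
      unfolding Fin_def by (subst sum.reindex) (auto simp: inj_on_def)
    finally show ?thesis .
  qed
  also have "(\<integral>\<^sup>+x. ?F x * indicator R10 x \<partial>count_space UNIV) = ennreal (\<Sum>k. f (1,0,k+dbar))"
    unfolding R10_def by (rule nn_range) (use nn s1 in \<open>auto simp: inj_def\<close>)
  also have "(\<integral>\<^sup>+x. ?F x * indicator R01 x \<partial>count_space UNIV) = ennreal (\<Sum>k. f (0,1,Suc k))"
    unfolding R01_def by (rule nn_range) (use nn s2 in \<open>auto simp: inj_def\<close>)
  finally show ?thesis
    using nn suminf_nonneg[OF s1] suminf_nonneg[OF s2]
    by (simp add: sum_nonneg ennreal_plus[symmetric] add_nonneg_nonneg del: ennreal_plus)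
qed

end

lemma G_norm:
  assumes "(cD::real) \<noteq> 0" "cD = (1+a1)*pb*B + (1+b1)*qb*A"
  shows "(1+a1)*(pb*B/cD) + (1+b1)*(qb*A/cD) = 1"
proof -
  have "(1+a1)*(pb*B/cD) + (1+b1)*(qb*A/cD) = ((1+a1)*pb*B + (1+b1)*qb*A)/cD"
    by (simp add: add_divide_distrib)
  then show ?thesis using assms by simp
qed

lemma G_e:
  assumes "(E::real) = 1 - pb*pf" "pb = 1-p" "ps = 1 - pf" "E \<noteq> 0"
  shows "q - p*(q*pf/E) = q*ps/E"
proof -
  have "q - p*(q*pf/E) = q*(E - p*pf)/E" using assms(4) by (simp add: field_simps)
  also have "E - p*pf = ps" using assms(1-3) by (simp add: algebra_simps)
  finally show ?thesis .
qed

lemma G_rel: "(q::real) \<noteq> 0 \<Longrightarrow> E \<noteq> 0 \<Longrightarrow> pb \<noteq> 0 \<Longrightarrow> cD \<noteq> 0 \<Longrightarrow> (q*ps/E) * (qb*A/cD) = qb*ps*A*(pb*(q/(pb*E))/cD)"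
  by (simp add: field_simps)

lemma G_m1: "(q::real) \<noteq> 0 \<Longrightarrow> ps \<noteq> 0 \<Longrightarrow> E \<noteq> 0 \<Longrightarrow> pb \<noteq> 0 \<Longrightarrow> (q*ps/E)*m1 = qb*ps*A*m0 \<Longrightarrow> m1 = qb*A*m0/(pb*(q/(pb*E)))"
  by (simp add: field_simps)

lemma G_solve:
  assumes "(pbB::real) \<noteq> 0" "cD \<noteq> 0" "cD = (1+a1)*pbB + (1+b1)*qbA" "m1 = qbA*m0/pbB" "1 = (1+a1)*m0 + (1+b1)*m1"
  shows "m0 = pbB/cD \<and> m1 = qbA/cD"
proof -
  have "1 = (1+a1)*m0 + (1+b1)*(qbA*m0/pbB)" using assms(4,5) by simp
  also have "\<dots> = m0 * ((1+a1)*pbB + (1+b1)*qbA) / pbB" using assms(1) by (simp add: field_simps)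
  also have "\<dots> = m0 * cD / pbB" using assms(3) by simp
  finally have "1 = m0 * cD / pbB" .
  then have m0: "m0 = pbB / cD" using assms(1,2) by (simp add: field_simps)
  then show ?thesis using assms(1,2,4) by simp
qed

context M begin

definition "cA = p * qb ^ (dbar - 1) / (1 - qb * pf)"
definition "ca1 = p * (1 - qb ^ (dbar - 1)) / (1 - qb) + cA"
definition "cb1 = q * pf / (1 - pb * pf)"
definition "cB = q / (pb * (1 - pb * pf))"
definition "cD = (1 + ca1) * pb * cB + (1 + cb1) * qb * cA"
definition "n0 = pb * cB / cD"
definition "n1 = qb * cA / cD"

lemma Xb: "0 < qb ^ (dbar - 1)" "qb ^ (dbar - 1) \<le> 1"
  using pos q0 q1 by (auto intro!: power_le_one)

lemma cpos: "0 < cA" "0 \<le> ca1" "0 \<le> cb1" "0 < cB" "0 < cD" "0 < n0" "0 < n1"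
proof -
  show A: "0 < cA" using pos p0 Xb by (simp add: cA_def)
  show a1: "0 \<le> ca1" using pos p0 Xb q0 A by (simp add: ca1_def)
  show b1: "0 \<le> cb1" using pos q0 by (simp add: cb1_def)
  show B: "0 < cB" using pos q0 by (simp add: cB_def)
  show D: "0 < cD" unfolding cD_def using A a1 b1 B pos
    by (intro add_pos_nonneg) (auto intro!: mult_pos_pos mult_nonneg_nonneg)
  show "0 < n0" using D B pos unfolding n0_def by (intro divide_pos_pos mult_pos_pos)
  show "0 < n1" using D A pos unfolding n1_def by (intro divide_pos_pos mult_pos_pos)
qed

lemma ee: "q - p * cb1 = q * ps / (1 - pb * pf)"
  unfolding cb1_def by (rule G_e) (use pos in auto)

lemma norm_eq: "(1 + ca1) * n0 + (1 + cb1) * n1 = 1"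
  unfolding n0_def n1_def by (rule G_norm) (use cpos in \<open>auto simp: cD_def\<close>)

lemma rel_eq: "q * n1 = qb * ps * cA * n0 + p * cb1 * n1"
proof -
  have "(q - p * cb1) * n1 = qb * ps * cA * n0"
    unfolding ee n0_def n1_def cB_def by (rule G_rel) (use pos cpos q0 in \<open>auto simp: cD_def\<close>)
  then show ?thesis by (simp add: algebra_simps)
qed

lemma solve:
  assumes "1 = (1 + ca1) * m0 + (1 + cb1) * m1" "q * m1 = qb * ps * cA * m0 + p * cb1 * m1"
  shows "m0 = n0" "m1 = n1"
proof -
  have "(q - p * cb1) * m1 = qb * ps * cA * m0" using assms(2) by (simp add: algebra_simps)
  then have m1: "m1 = qb * cA * m0 / (pb * cB)" unfolding ee cB_def
    by (intro G_m1[where E="1 - pb * pf" and q=q and ps=ps]) (use pos ps0 q0 in auto)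
  have "m0 = pb * cB / cD \<and> m1 = qb * cA / cD"
    by (rule G_solve[OF _ _ _ _ assms(1)]) (use pos cpos m1 in \<open>auto simp: cD_def algebra_simps\<close>)
  then show "m0 = n0" "m1 = n1" by (auto simp: n0_def n1_def)
qed

definition w :: "nat \<Rightarrow> real" where
  "w k = (if k \<le> dbar then qb ^ (k - 1) else qb ^ (dbar - 1) * (qb * pf) ^ (k - dbar))"

lemma w1: "w 1 = 1" using d1 by (simp add: w_def)

lemma wstep: "1 \<le> k \<Longrightarrow> w (Suc k) = (if k < dbar then qb else qb * pf) * w k"
proof -
  assume k: "1 \<le> k"
  consider "k < dbar" | "k = dbar" | "dbar < k" by linarith
  then show ?thesis
  proof cases
    case 1 then show ?thesis using k by (simp add: w_def power_Suc[symmetric] Suc_diff_le del: power_Suc)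
  next
    case 2 then show ?thesis using k by (simp add: w_def)
  next
    case 3 then show ?thesis by (simp add: w_def Suc_diff_le algebra_simps)
  qed
qed

lemma wtail: "w (k + dbar) = qb ^ (dbar - 1) * (qb * pf) ^ k"
  by (cases k) (auto simp: w_def)

lemma wfin: "(\<Sum>k\<in>{1..<dbar}. w k) = (1 - qb ^ (dbar - 1)) / q"
proof -
  have "(\<Sum>k\<in>{1..<Suc m}. w k) = (1 - qb ^ m) / q" if "m < dbar" for m
    using that
  proof (induction m)
    case 0 then show ?case by simp
  next
    case (Suc m)
    then have "(\<Sum>k\<in>{1..<Suc (Suc m)}. w k) = (1 - qb ^ m) / q + qb ^ m"
      by (simp add: w_def)
    also have "\<dots> = (1 - qb ^ Suc m) / q" using q0 by (simp add: field_simps)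
    finally show ?case .
  qed
  from this[of "dbar - 1"] show ?thesis using d1 by simp
qed

definition nu :: "st \<Rightarrow> real" where
  "nu s = (case s of (x,xh,d) \<Rightarrow> if x = 0 \<and> xh = 0 \<and> d = 0 then n0 else if x = 1 \<and> xh = 1 \<and> d = 0 then n1
     else if x = 1 \<and> xh = 0 \<and> 1 \<le> d then p * w d * n0
     else if x = 0 \<and> xh = 1 \<and> 1 \<le> d then q * pf * (pb * pf) ^ (d - 1) * n1 else 0)"

lemma nu_simps: "nu (0,0,0) = n0" "nu (1,1,0) = n1" "1 \<le> d \<Longrightarrow> nu (1,0,d) = p * w d * n0"
  "1 \<le> d \<Longrightarrow> nu (0,1,d) = q * pf * (pb * pf) ^ (d - 1) * n1"
  by (auto simp: nu_def)

lemma nu_out: "s \<notin> state_space \<Longrightarrow> nu s = 0"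
  by (cases s) (auto simp: nu_def state_space_def)

lemma w_nn: "0 \<le> w k" using pos by (simp add: w_def)

lemma nu_nn: "0 \<le> nu s"
  using cpos pos w_nn p0 q0 by (auto simp: nu_def split: prod.splits)

lemma sum10: "(\<lambda>k. p * w (k + dbar) * m) sums (cA * m)"
proof -
  have "(\<lambda>k. (p * qb ^ (dbar - 1) * m) * (qb * pf) ^ k) sums ((p * qb ^ (dbar - 1) * m) * (1 / (1 - qb * pf)))"
    by (intro sums_mult geometric_sums) (use pos in auto)
  then show ?thesis by (simp add: wtail cA_def algebra_simps)
qed

lemma sum01: "(\<lambda>k. q * pf * (pb * pf) ^ k * m) sums (cb1 * m)"
proof -
  have "(\<lambda>k. (q * pf * m) * (pb * pf) ^ k) sums ((q * pf * m) * (1 / (1 - pb * pf)))"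
    by (intro sums_mult geometric_sums) (use pos in auto)
  then show ?thesis by (simp add: cb1_def algebra_simps)
qed

end

context M begin

lemma f10_gen:
  assumes SS: "set_pmf \<mu> \<subseteq> state_space" and st: "\<And>d. 1 \<le> d \<Longrightarrow> pmf (bind_pmf \<mu> K) (1,0,d) = pmf \<mu> (1,0,d)"
  shows "1 \<le> k \<Longrightarrow> pmf \<mu> (1,0,k) = p * w k * pmf \<mu> (0,0,0)"
proof (induction k rule: nat_induct_at_least)
  case base
  show ?case using bal_101[OF SS] st[of 1] w1 by simp
next
  case (Suc k)
  have "pmf \<mu> (1,0,Suc k) = pmf (bind_pmf \<mu> K) (1,0,Suc k)" using st[of "Suc k"] by simp
  also have "\<dots> = (if k < dbar then qb else qb * pf) * pmf \<mu> (1,0,k)" by (rule bal_10S[OF SS Suc(1)])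
  also have "\<dots> = p * w (Suc k) * pmf \<mu> (0,0,0)" using Suc(2) wstep[OF Suc(1)] by simp
  finally show ?case .
qed

lemma f01_gen:
  assumes SS: "set_pmf \<mu> \<subseteq> state_space" and st: "\<And>d. 1 \<le> d \<Longrightarrow> pmf (bind_pmf \<mu> K) (0,1,d) = pmf \<mu> (0,1,d)"
  shows "1 \<le> k \<Longrightarrow> pmf \<mu> (0,1,k) = q * pf * (pb * pf) ^ (k - 1) * pmf \<mu> (1,1,0)"
proof (induction k rule: nat_induct_at_least)
  case base
  show ?case using bal_011[OF SS] st[of 1] by simp
next
  case (Suc k)
  have "pmf \<mu> (0,1,Suc k) = pmf (bind_pmf \<mu> K) (0,1,Suc k)" using st[of "Suc k"] by simp
  also have "\<dots> = pb * pf * pmf \<mu> (0,1,k)" by (rule bal_01S[OF SS Suc(1)])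
  also have "\<dots> = q * pf * (pb * pf) ^ (Suc k - 1) * pmf \<mu> (1,1,0)"
  proof -
    have e: "(pb*pf)^(Suc k - 1) = (pb*pf) * (pb*pf)^(k-1)" using Suc(1) by (cases k) auto
    show ?thesis unfolding e Suc(2) by (simp only: ac_simps)
  qed
  finally show ?case .
qed

lemma sums_from_form:
  assumes f10: "\<And>k. 1 \<le> k \<Longrightarrow> pmf \<mu> (1,0,k) = p * w k * m0"
    and f01: "\<And>k. 1 \<le> k \<Longrightarrow> pmf \<mu> (0,1,k) = q * pf * (pb * pf) ^ (k - 1) * m1"
  shows "(\<lambda>k. pmf \<mu> (1,0,k+dbar)) sums (cA * m0)" "(\<lambda>k. pmf \<mu> (0,1,Suc k)) sums (cb1 * m1)"
    "(\<Sum>k\<in>{1..<dbar}. pmf \<mu> (1,0,k)) = p * m0 * (1 - qb ^ (dbar - 1)) / q"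
proof -
  show "(\<lambda>k. pmf \<mu> (1,0,k+dbar)) sums (cA * m0)"
    using sum10[of m0] f10 d1 by simp
  show "(\<lambda>k. pmf \<mu> (0,1,Suc k)) sums (cb1 * m1)"
    using sum01[of m1] f01 by simp
  have "(\<Sum>k\<in>{1..<dbar}. pmf \<mu> (1,0,k)) = (\<Sum>k\<in>{1..<dbar}. p * m0 * w k)"
    by (rule sum.cong) (auto simp: f10)
  also have "\<dots> = p * m0 * (\<Sum>k\<in>{1..<dbar}. w k)" by (rule sum_distrib_left[symmetric])
  also have "\<dots> = p * m0 * (1 - qb ^ (dbar - 1)) / q" by (simp only: wfin) simp
  finally show "(\<Sum>k\<in>{1..<dbar}. pmf \<mu> (1,0,k)) = p * m0 * (1 - qb ^ (dbar - 1)) / q" .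
qed

lemma ca1_eq: "ca1 = p * (1 - qb ^ (dbar - 1)) / q + cA"
  by (simp add: ca1_def)

lemma stat_unique:
  assumes SS: "set_pmf \<mu> \<subseteq> state_space" and st: "bind_pmf \<mu> K = \<mu>"
  shows "pmf \<mu> s = nu s"
proof -
  define m0 where "m0 = pmf \<mu> (0,0,0)"
  define m1 where "m1 = pmf \<mu> (1,1,0)"
  have f10: "\<And>k. 1 \<le> k \<Longrightarrow> pmf \<mu> (1,0,k) = p * w k * m0"
    unfolding m0_def by (rule f10_gen[OF SS]) (simp add: st)
  have f01: "\<And>k. 1 \<le> k \<Longrightarrow> pmf \<mu> (0,1,k) = q * pf * (pb * pf) ^ (k - 1) * m1"
    unfolding m1_def by (rule f01_gen[OF SS]) (simp add: st)
  note S = sums_from_form[OF f10 f01]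
  have e1: "(\<Sum>k. pmf \<mu> (1,0,k+dbar)) = cA*m0" using sums_unique[OF S(1)] by simp
  have e2: "(\<Sum>k. pmf \<mu> (0,1,Suc k)) = cb1*m1" using sums_unique[OF S(2)] by simp
  have "1 = m0 + m1 + p * m0 * (1 - qb ^ (dbar - 1)) / q + cA*m0 + cb1*m1"
    using decomp[OF SS] e1 e2 S(3) unfolding m0_def m1_def by linarith
  also have "\<dots> = (1 + ca1) * m0 + (1 + cb1) * m1" using q0 by (simp add: ca1_eq field_simps)
  finally have n: "1 = (1 + ca1) * m0 + (1 + cb1) * m1" .
  have pR10: "measure_pmf.prob \<mu> R10 = cA * m0"
    unfolding R10_def using sums_pmf[of "\<lambda>k. (1,0,k+dbar)" \<mu>] S(1) by (auto simp: inj_def sums_unique2)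
  have pR01: "measure_pmf.prob \<mu> R01 = cb1 * m1"
    unfolding R01_def using sums_pmf[of "\<lambda>k. (0,1,Suc k)" \<mu>] S(2) by (auto simp: inj_def sums_unique2)
  have "m1 = qb * m1 + qb * ps * (cA * m0) + p * (cb1 * m1)"
    using bal_110[OF SS] unfolding st pR10 pR01 m1_def by simp
  then have r: "q * m1 = qb * ps * cA * m0 + p * cb1 * m1" by (simp add: algebra_simps)
  have m0: "m0 = n0" and m1: "m1 = n1" using solve[OF n r] by auto
  show ?thesis
  proof (cases "s \<in> state_space")
    case True then show ?thesis
    proof (cases rule: SS_cases)
      case 1 show ?thesis unfolding 1 nu_simps(1) m0[symmetric] m0_def ..
    next
      case 2 show ?thesis unfolding 2 nu_simps(2) m1[symmetric] m1_def ..
    next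
      case (3 d) show ?thesis unfolding 3(1) nu_simps(3)[OF 3(2)] f10[OF 3(2)] m0 ..
    next
      case (4 d) show ?thesis unfolding 4(1) nu_simps(4)[OF 4(2)] f01[OF 4(2)] m1 ..
    qed
  next
    case False
    then have "s \<notin> set_pmf \<mu>" using SS by auto
    then show ?thesis using False nu_out by (simp add: set_pmf_eq)
  qed
qed

end

context M begin

lemma nu_simps2: "nu (Suc 0, Suc 0, 0) = n1" "Suc 0 \<le> d \<Longrightarrow> nu (Suc 0,0,d) = p * w d * n0"
  "Suc 0 \<le> d \<Longrightarrow> nu (0,Suc 0,d) = q * pf * (pb * pf) ^ (d - 1) * n1"
  using nu_simps by (auto simp: One_nat_def)

lemma nu_int: "(\<integral>\<^sup>+x. ennreal (nu x) \<partial>count_space UNIV) = 1"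
proof -
  have s1: "(\<lambda>k. nu (1,0,k+dbar)) sums (cA * n0)" using sum10[of n0] d1 by (simp add: nu_simps nu_simps2)
  have s2: "(\<lambda>k. nu (0,1,Suc k)) sums (cb1 * n1)" using sum01[of n1] by (simp add: nu_simps nu_simps2)
  have s3: "(\<Sum>k\<in>{1..<dbar}. nu (1,0,k)) = p * n0 * (1 - qb ^ (dbar - 1)) / q"
  proof -
    have "(\<Sum>k\<in>{1..<dbar}. nu (1,0,k)) = (\<Sum>k\<in>{1..<dbar}. p * n0 * w k)"
      by (rule sum.cong) (auto simp: nu_simps nu_simps2)
    also have "\<dots> = p * n0 * (\<Sum>k\<in>{1..<dbar}. w k)" by (rule sum_distrib_left[symmetric])
    also have "\<dots> = p * n0 * (1 - qb ^ (dbar - 1)) / q" by (simp only: wfin) simp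
    finally show ?thesis .
  qed
  have "(\<integral>\<^sup>+x. ennreal (nu x) \<partial>count_space UNIV) = ennreal (nu (0,0,0) + nu (1,1,0) + (\<Sum>k\<in>{1..<dbar}. nu (1,0,k))
      + (\<Sum>k. nu (1,0,k+dbar)) + (\<Sum>k. nu (0,1,Suc k)))"
    by (rule nn_sum) (use nu_nn nu_out s1 s2 in \<open>auto intro: sums_summable\<close>)
  also have "nu (0,0,0) + nu (1,1,0) + (\<Sum>k\<in>{1..<dbar}. nu (1,0,k)) + (\<Sum>k. nu (1,0,k+dbar)) + (\<Sum>k. nu (0,1,Suc k))
     = n0 + n1 + p * n0 * (1 - qb ^ (dbar - 1)) / q + cA * n0 + cb1 * n1"
    unfolding s3 sums_unique[OF s1, symmetric] sums_unique[OF s2, symmetric] nu_simps ..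
  also have "\<dots> = (1 + ca1) * n0 + (1 + cb1) * n1" using q0 by (simp add: ca1_eq field_simps)
  also have "\<dots> = 1" by (rule norm_eq)
  finally show ?thesis by simp
qed

definition "mu0 = embed_pmf nu"

lemma pmf_mu0: "pmf mu0 s = nu s"
  unfolding mu0_def by (rule pmf_embed_pmf) (use nu_nn nu_int in auto)

lemma mu0_SS: "set_pmf mu0 \<subseteq> state_space"
  using nu_out by (auto simp: set_pmf_eq pmf_mu0)

lemma mu0_pt:
  assumes "t \<noteq> (0,0,0)"
  shows "pmf (bind_pmf mu0 K) t = pmf mu0 t"
proof (cases "t \<in> state_space")
  case False
  have "t \<notin> set_pmf (bind_pmf mu0 K)" using bind_SS[OF mu0_SS] False by auto
  then show ?thesis using False by (simp add: set_pmf_eq pmf_mu0 nu_out)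
next
  case True
  then show ?thesis
  proof (cases rule: SS_cases)
    case 1 then show ?thesis using assms by simp
  next
    case 2
    have f10: "\<And>k. 1 \<le> k \<Longrightarrow> pmf mu0 (1,0,k) = p * w k * n0" unfolding pmf_mu0 by (rule nu_simps(3))
    have f01: "\<And>k. 1 \<le> k \<Longrightarrow> pmf mu0 (0,1,k) = q * pf * (pb * pf) ^ (k - 1) * n1" unfolding pmf_mu0 by (rule nu_simps(4))
    note S = sums_from_form[OF f10 f01]
    have pR10: "measure_pmf.prob mu0 R10 = cA * n0"
      unfolding R10_def using sums_pmf[of "\<lambda>k. (1,0,k+dbar)" mu0] S(1) by (auto simp: inj_def sums_unique2)
    have pR01: "measure_pmf.prob mu0 R01 = cb1 * n1"
      unfolding R01_def using sums_pmf[of "\<lambda>k. (0,1,Suc k)" mu0] S(2) by (auto simp: inj_def sums_unique2)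
    have "pmf (bind_pmf mu0 K) (1,1,0) = qb * n1 + qb * ps * (cA * n0) + p * (cb1 * n1)"
      using bal_110[OF mu0_SS] unfolding pR10 pR01 by (simp add: pmf_mu0 nu_simps nu_simps2)
    also have "\<dots> = n1" using rel_eq by (simp add: algebra_simps)
    finally show ?thesis unfolding 2 by (simp add: pmf_mu0 nu_simps nu_simps2)
  next
    case (3 d)
    show ?thesis
    proof (cases "d = 1")
      case True
      show ?thesis unfolding 3(1) True bal_101[OF mu0_SS] pmf_mu0 nu_simps(1) nu_simps(3)[OF order.refl] w1 by simp
    next
      case False
      then obtain k where k: "d = Suc k" "1 \<le> k" using 3(2) by (cases d) auto
      show ?thesis unfolding 3(1) k(1) bal_10S[OF mu0_SS k(2)] pmf_mu0 nu_simps(3)[OF k(2)] nu_simps(3)[OF le_SucI[OF k(2)]]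
        wstep[OF k(2)] by simp
    qed
  next
    case (4 d)
    show ?thesis
    proof (cases "d = 1")
      case True
      show ?thesis unfolding 4(1) True bal_011[OF mu0_SS] pmf_mu0 nu_simps(2) nu_simps(4)[OF order.refl] by simp
    next
      case False
      then obtain k where k: "d = Suc k" "1 \<le> k" using 4(2) by (cases d) auto
      have e: "(pb*pf)^(Suc k - 1) = (pb*pf) * (pb*pf)^(k-1)" using k(2) by (cases k) auto
      show ?thesis unfolding 4(1) k(1) bal_01S[OF mu0_SS k(2)] pmf_mu0 nu_simps(4)[OF k(2)] nu_simps(4)[OF le_SucI[OF k(2)]] e
        by (simp only: ac_simps)
    qed
  qed
qed

lemma mu0_stat: "bind_pmf mu0 K = mu0"
proof (rule pmf_eqI)
  fix t
  show "pmf (bind_pmf mu0 K) t = pmf mu0 t"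
  proof (cases "t = (0,0,0)")
    case False then show ?thesis by (rule mu0_pt)
  next
    case True
    have o: "\<And>s. s \<noteq> (0,0,0) \<Longrightarrow> pmf (bind_pmf mu0 K) s = pmf mu0 s" by (rule mu0_pt)
    have "pmf (bind_pmf mu0 K) (1,1,0) + (\<Sum>k\<in>{1..<dbar}. pmf (bind_pmf mu0 K) (1,0,k))
       + (\<Sum>k. pmf (bind_pmf mu0 K) (1,0,k+dbar)) + (\<Sum>k. pmf (bind_pmf mu0 K) (0,1,Suc k))
     = pmf mu0 (1,1,0) + (\<Sum>k\<in>{1..<dbar}. pmf mu0 (1,0,k))
       + (\<Sum>k. pmf mu0 (1,0,k+dbar)) + (\<Sum>k. pmf mu0 (0,1,Suc k))"
      by (simp add: o)
    then show ?thesis unfolding True using decomp[OF mu0_SS] decomp[OF bind_SS[OF mu0_SS]] by linarith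
  qed
qed

end

lemma alg_lin:
  fixes p q pf be lam X dd E G g :: real
  assumes q: "0 < q" and E: "E \<noteq> 0" and G: "G \<noteq> 0"
  shows "p * (be / q + ((1-q) * be / q - g) / q * (1 - X) + X * (be/G * dd - be * dd / q +
      (lam - g + (1-q) * pf * (be/G) + (1-q) * ((E + q*pf) * (lam - g) + q * pf * ((1-be)/E)) / q) / G))
    = p * (be / q + ((1-q) * be / q) / q * (1 - X) + X * (be/G * dd - be * dd / q +
      (lam + (1-q) * pf * (be/G) + (1-q) * ((E + q*pf) * (lam) + q * pf * ((1-be)/E)) / q) / G))
     - (p * (1 - X) / q + p * X * (1 + (1-q) * (E + q * pf) / q) / G) * g"
  using q E G by (simp add: field_simps)

lemma alg_c0:
  fixes p q pf be lam X dd E G :: real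
  assumes q: "0 < q" and E: "E \<noteq> 0" and G: "G = 1 - (1-q)*pf" "G \<noteq> 0"
  shows "p * (be / q + ((1-q) * be / q) / q * (1 - X) + X * (be/G * dd - be * dd / q +
      (lam + (1-q) * pf * (be/G) + (1-q) * ((E + q*pf) * (lam) + q * pf * ((1-be)/E)) / q) / G)) * (q / E)
   = be * p * ((1 - ((1-q) + (1 - (1-q)) * dd) * X) / (1 - (1-q))^2 + ((1-q) * pf + (1 - (1-q) * pf) * dd) * X / (1 - (1-q) * pf)^2) * (q / E)
     + (1 - be) * q * pf * ((1-q) * (p * X / G)) / E^2
     + lam * ((p * X / G) * (q / E) + (1 + q * pf / E) * ((1-q) * (p * X / G)))"
proof -
  have e1: "1 - (1-q) * pf = G" "1 - (1 - q) = q" using G by auto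
  show ?thesis
    unfolding e1 using q E G(2)
    by (simp add: field_simps power2_eq_square)
qed

lemma K1gen:
  fixes p q pf ps be lam X dd E G A pbB bb aa cD psi g alA H alB gaB bz C :: real
  assumes q: "0<q" and E: "E \<noteq> 0" and G: "G = 1-(1-q)*pf" "G\<noteq>0" and ps: "ps \<noteq> 0"
  and A: "A = p*X/G" and pbB: "pbB = q/E" and bb: "bb = q*pf/E" and aa: "aa = p*(1-X)/q + A"
  and cD: "cD = (1+aa)*pbB + (1+bb)*((1-q)*A)" "cD \<noteq> 0"
  and psi: "psi = (1 - ((1-q) + (1-(1-q))*dd)*X)/(1-(1-q))^2 + ((1-q)*pf + (1-(1-q)*pf)*dd)*X/(1-(1-q)*pf)^2"
  and g: "g = be*p*psi*(pbB/cD) + (1-be)*q*pf*((1-q)*A/cD)/E^2 + lam*(A*(pbB/cD) + (1+bb)*((1-q)*A/cD))"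
  and alA: "alA = (1-be)/E" and H: "H = ((E + q*pf)*(lam-g) + q*pf*alA)/(q*ps)"
  and alB: "alB = be/G" and gaB: "gaB = (lam - g + (1-q)*pf*alB + (1-q)*ps*H)/G"
  and bz: "bz = ((1-q)*be/q - g)/q" and C: "C = alB*dd + gaB - be*dd/q - bz"
  shows "p*(be/q + bz + C*X) = g"
proof -
  define c0 where "c0 = p * (be / q + ((1-q) * be / q) / q * (1 - X) + X * (be/G * dd - be * dd / q +
      (lam + (1-q) * pf * (be/G) + (1-q) * ((E + q*pf) * (lam) + q * pf * ((1-be)/E)) / q) / G))"
  define k where "k = p * (1 - X) / q + p * X * (1 + (1-q) * (E + q * pf) / q) / G"
  have e2: "(1-q)*ps*H = (1-q)*((E + q*pf)*(lam-g) + q*pf*((1-be)/E))/q"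
    unfolding H alA using ps q by (simp add: field_simps)
  have e1: "be/q + bz + C*X = be/q + ((1-q)*be/q - g)/q*(1-X) + X*(be/G*dd - be*dd/q +
      (lam - g + (1-q) * pf * (be/G) + (1-q) * ((E + q*pf) * (lam - g) + q * pf * ((1-be)/E)) / q) / G)"
    unfolding C bz gaB e2 alB using q by (simp add: field_simps)
  have l: "p*(be/q + bz + C*X) = c0 - k*g" unfolding e1 c0_def k_def by (rule alg_lin[OF q E G(2)])
  have kk: "1 + k = cD * E / q" unfolding k_def cD aa pbB bb A using q E G(2) by (simp add: field_simps)
  have gcD: "g * cD = be*p*psi*pbB + (1-be)*q*pf*((1-q)*A)/E^2 + lam*(A*pbB + (1+bb)*((1-q)*A))"
    unfolding g using cD(2) E by (simp add: field_simps)
  have c0: "c0 * (q/E) = g * cD" unfolding gcD c0_def psi A pbB bb by (rule alg_c0[OF q E G])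
  have h1: "c0 * q = E*cD*g" using c0 q E by (simp add: field_simps)
  have h2: "E*cD = (1+k)*q" using kk q by (simp add: field_simps)
  have "c0 * q = (g*(1+k)) * q" unfolding h1 h2 by (simp add: algebra_simps)
  then have "c0 = g * (1 + k)" using q by simp
  then show ?thesis unfolding l by (simp add: algebra_simps)
qed

lemma K2gen:
  fixes E pb pf p ps q H lam g al1 :: real
  assumes "E = 1 - pb*pf" "pb = 1-p" "ps = 1-pf" "q*ps*H = (E+q*pf)*(lam-g) + q*pf*al1" "E \<noteq> 0"
  shows "lam + (1-q)*H + q*pf*(al1 + (lam - g + pb*pf*al1 + p*H)/E) = g + H"
proof -
  have "E * (lam + (1-q)*H + q*pf*(al1 + (lam - g + pb*pf*al1 + p*H)/E)) = E * (g + H)"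
    using assms(5) apply (simp add: field_simps)
    using assms(1-4) by algebra
  then show ?thesis using assms(5) by simp
qed

lemma K3gen:
  fixes q be b0 g C Y x :: real
  assumes "b0 = ((1-q)*be/q - g)/q" "q \<noteq> 0"
  shows "(1-q)*(be*(x+1)/q + b0 + C*Y) = g + be*x/q + b0 + C*((1-q)*Y) - be*x"
proof -
  have "q * q * ((1-q)*(be*(x+1)/q + b0 + C*Y)) = q * q * (g + be*x/q + b0 + C*((1-q)*Y) - be*x)"
    unfolding assms(1) using assms(2) by (simp add: field_simps)
  then show ?thesis using assms(2) by simp
qed

lemma K4gen:
  fixes G r lam s H al2 ga2 g be x :: real
  assumes "G = 1 - r" "al2 = be/G" "ga2 = (lam - g + r*al2 + s*H)/G" "G \<noteq> 0"
  shows "lam + s*H + r*(al2*(x+1) + ga2) = g + al2*x + ga2 - be*x"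
proof -
  have "G * (lam + s*H + r*(al2*(x+1) + ga2)) = G * (g + al2*x + ga2 - be*x)"
    unfolding assms(3) assms(2) using assms(4) apply (simp add: field_simps)
    using assms(1) by algebra
  then show ?thesis using assms(4) by simp
qed

locale M2 = M +
  fixes be lam :: real
begin

definition "g = be * p * psi pf qb dbar * n0 + (1 - be) * q * pf * n1 / (1 - pb * pf)^2 + lam * (cA * n0 + (1 + cb1) * n1)"
definition "al1 = (1 - be) / (1 - pb * pf)"
definition "H = ((1 - pb * pf + q * pf) * (lam - g) + q * pf * al1) / (q * ps)"
definition "ga1 = (lam - g + pb * pf * al1 + p * H) / (1 - pb * pf)"
definition "al2 = be / (1 - qb * pf)"
definition "ga2 = (lam - g + qb * pf * al2 + qb * ps * H) / (1 - qb * pf)"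
definition "b0 = (qb * be / q - g) / q"
definition "C = al2 * real dbar + ga2 - be * real dbar / q - b0"
definition "Fq d = be * real d / q + b0 + C * qb ^ (dbar - d)"

definition h :: "st \<Rightarrow> real" where
  "h s = (case s of (x,xh,d) \<Rightarrow> if x = 1 \<and> xh = 1 then H else if x = 1 \<and> xh = 0 then
      (if d < dbar then Fq d else al2 * real d + ga2) else if x = 0 \<and> xh = 1 then al1 * real d + ga1 else 0)"

definition "h2 s = h s - state_cost be s"

lemma K1: "p * Fq 1 = g"
proof -
  have "Fq 1 = be / q + b0 + C * qb ^ (dbar - 1)" by (simp add: Fq_def)
  moreover have "p * (be / q + b0 + C * qb ^ (dbar - 1)) = g"
  proof (rule K1gen[where E="1 - pb*pf" and G="1 - qb*pf" and ps=ps and A=cA and pbB="pb*cB" and bb=cb1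
        and aa=ca1 and cD=cD and psi="psi pf qb dbar" and dd="real dbar" and lam=lam and alA=al1 and H=H
        and alB=al2 and gaB=ga2 and pf=pf and bz=b0 and C=C and X="qb ^ (dbar - 1)" and p=p and be=be and g=g])
    show "0 < q" by (rule q0)
    show "1 - pb*pf \<noteq> 0" "1 - qb*pf \<noteq> 0" "ps \<noteq> 0" using pos ps0 by auto
    show "1 - qb*pf = 1 - (1-q)*pf" by simp
    show "cA = p * qb ^ (dbar - 1) / (1 - qb * pf)" by (simp add: cA_def)
    show "pb * cB = q / (1 - pb*pf)" using pos by (simp add: cB_def)
    show "cb1 = q * pf / (1 - pb * pf)" by (simp add: cb1_def)
    show "ca1 = p * (1 - qb ^ (dbar - 1)) / q + cA" by (simp add: ca1_def)
    show "cD = (1 + ca1) * (pb * cB) + (1 + cb1) * ((1 - q) * cA)" by (simp add: cD_def mult.assoc)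
    show "cD \<noteq> 0" using cpos by simp
    show "psi pf qb dbar = (1 - ((1 - q) + (1 - (1 - q)) * real dbar) * qb ^ (dbar - 1)) / (1 - (1 - q))\<^sup>2 +
      ((1 - q) * pf + (1 - (1 - q) * pf) * real dbar) * qb ^ (dbar - 1) / (1 - (1 - q) * pf)\<^sup>2"
      by (simp only: psi_def)
    show "g = be * p * psi pf qb dbar * (pb * cB / cD) + (1 - be) * q * pf * ((1 - q) * cA / cD) / (1 - pb*pf)\<^sup>2 +
      lam * (cA * (pb * cB / cD) + (1 + cb1) * ((1 - q) * cA / cD))" by (simp add: g_def n0_def n1_def)
    show "al1 = (1 - be) / (1 - pb*pf)" by (simp add: al1_def)
    show "H = ((1 - pb*pf + q * pf) * (lam - g) + q * pf * al1) / (q * ps)" by (simp add: H_def)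
    show "al2 = be / (1 - qb*pf)" by (simp add: al2_def)
    show "ga2 = (lam - g + (1 - q) * pf * al2 + (1 - q) * ps * H) / (1 - qb*pf)" by (simp add: ga2_def)
    show "b0 = ((1 - q) * be / q - g) / q" by (simp add: b0_def)
    show "C = al2 * real dbar + ga2 - be * real dbar / q - b0" by (simp add: C_def)
  qed
  ultimately show ?thesis by simp
qed

lemma K2: "lam + qb * H + q * pf * (al1 + ga1) = g + H"
  unfolding ga1_def
  by (rule K2gen[where E="1 - pb*pf" and pb=pb and pf=pf and ps=ps])
     (use pos ps0 q0 in \<open>auto simp: H_def\<close>)

lemma K3: "qb * (be * (real d + 1) / q + b0 + C * Y) = g + be * real d / q + b0 + C * (qb * Y) - be * real d"
  by (rule K3gen) (use q0 in \<open>auto simp: b0_def\<close>)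

lemma K4: "lam + qb * ps * H + qb * pf * (al2 * (real d + 1) + ga2) = g + al2 * real d + ga2 - be * real d"
  by (rule K4gen[where G="1 - qb*pf"]) (use pos in \<open>auto simp: al2_def ga2_def\<close>)

lemma K5: "lam + p * H + pb * pf * (al1 * (real d + 1) + ga1) = g + al1 * real d + ga1 - (1 - be) * real d"
  by (rule K4gen[where G="1 - pb*pf"]) (use pos in \<open>auto simp: al1_def ga1_def\<close>)

lemma K6: "Fq dbar = al2 * real dbar + ga2"
  by (simp add: Fq_def C_def)

end

context M2 begin

lemma pol_vals: "\<not> pol (0,0,0)" "pol (1,1,0)" "pol (1,0,d) = (dbar \<le> d)" "pol (0,1,d)"
  using d1 by (auto simp: switching_policy_def)

lemma c_vals: "state_cost be (0,0,0) = 0" "state_cost be (1,1,0) = 0" "state_cost be (1,0,d) = be * real d"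
  "state_cost be (0,1,d) = (1 - be) * real d"
  by (simp_all add: state_cost_def)

lemma h_vals: "h (0,0,0) = 0" "h (1,1,0) = H" "h (1,0,d) = (if d < dbar then Fq d else al2 * real d + ga2)"
  "h (0,1,d) = al1 * real d + ga1"
  by (simp_all add: h_def)

lemma vals_S: "pol (Suc 0, Suc 0, 0)" "pol (Suc 0, 0, d) = (dbar \<le> d)" "pol (0, Suc 0, d)"
  "state_cost be (Suc 0, Suc 0, 0) = 0" "state_cost be (Suc 0, 0, d) = be * real d"
  "state_cost be (0, Suc 0, d) = (1 - be) * real d"
  "h (Suc 0, Suc 0, 0) = H" "h (Suc 0, 0, d) = (if d < dbar then Fq d else al2 * real d + ga2)"
  "h (0, Suc 0, d) = al1 * real d + ga1"
  using pol_vals c_vals h_vals by (simp_all add: One_nat_def)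

lemma h10: "d \<le> dbar \<Longrightarrow> h (1,0,d) = Fq d"
  using K6 by (cases "d < dbar") (auto simp: h_vals vals_S)

lemma poisson:
  assumes "s \<in> state_space"
  shows "stage_cost p q ps be lam s (pol s) + measure_pmf.expectation (K s) h2 = g + h2 s"
  using assms
proof (cases rule: SS_cases)
  case 1
  have "stage_cost p q ps be lam s (pol s) + measure_pmf.expectation (K s) h2 = p * h (1,0,1)"
    unfolding 1 stage_cost_def EK000 h2_def using pol_vals(1) by (simp add: c_vals h_vals vals_S algebra_simps)
  also have "\<dots> = g" using K1 h10[of 1] d1 by simp
  finally show ?thesis unfolding 1 h2_def by (simp add: c_vals h_vals vals_S)
next
  case 2
  have "stage_cost p q ps be lam s (pol s) + measure_pmf.expectation (K s) h2 = lam + qb * H + q * pf * (al1 + ga1)"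
    unfolding 2 stage_cost_def EK110 h2_def using pol_vals(2) by (simp add: c_vals h_vals vals_S algebra_simps)
  also have "\<dots> = g + H" by (rule K2)
  finally show ?thesis unfolding 2 h2_def by (simp add: c_vals h_vals vals_S)
next
  case (3 d)
  show ?thesis
  proof (cases "d < dbar")
    case True
    have e: "qb ^ (dbar - d) = qb * qb ^ (dbar - Suc d)" using True by (simp add: Suc_diff_Suc[symmetric] del: Suc_diff_Suc)
    have "stage_cost p q ps be lam s (pol s) + measure_pmf.expectation (K s) h2 = qb * h (1,0,Suc d)"
      unfolding 3 stage_cost_def EK10lo[OF True] h2_def using pol_vals(3)[of d] True by (simp add: c_vals h_vals vals_S algebra_simps)
    also have "\<dots> = qb * (be * (real d + 1) / q + b0 + C * qb ^ (dbar - Suc d))"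
      using h10[of "Suc d"] True by (simp add: Fq_def)
    also have "\<dots> = g + be * real d / q + b0 + C * (qb * qb ^ (dbar - Suc d)) - be * real d" by (rule K3)
    also have "\<dots> = g + h2 s" unfolding 3 h2_def using True by (simp add: c_vals h_vals vals_S Fq_def e)
    finally show ?thesis .
  next
    case False
    then have F: "dbar \<le> d" by simp
    have "stage_cost p q ps be lam s (pol s) + measure_pmf.expectation (K s) h2
        = lam + qb * ps * H + qb * pf * (al2 * (real d + 1) + ga2)"
      unfolding 3 stage_cost_def EK10hi[OF F] h2_def using pol_vals(3)[of d] F by (simp add: c_vals h_vals vals_S algebra_simps)
    also have "\<dots> = g + al2 * real d + ga2 - be * real d" by (rule K4)
    also have "\<dots> = g + h2 s" unfolding 3 h2_def using F by (simp add: c_vals h_vals vals_S)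
    finally show ?thesis .
  qed
next
  case (4 d)
  have "stage_cost p q ps be lam s (pol s) + measure_pmf.expectation (K s) h2
      = lam + p * H + pb * pf * (al1 * (real d + 1) + ga1)"
    unfolding 4 stage_cost_def EK01 h2_def using pol_vals(4)[of d] by (simp add: c_vals h_vals vals_S algebra_simps)
  also have "\<dots> = g + al1 * real d + ga1 - (1 - be) * real d" by (rule K5)
  also have "\<dots> = g + h2 s" unfolding 4 h2_def by (simp add: c_vals h_vals vals_S)
  finally show ?thesis .
qed

end

context M2 begin

abbreviation "sd n \<equiv> state_dist p q ps pol n"

lemma sd_0: "sd 0 = return_pmf (0,0,0)" by (simp add: state_dist_def)
lemma dist_Suc: "sd (Suc n) = bind_pmf (sd n) K" by (simp add: state_dist_def)

lemma dist_SS: "set_pmf (sd n) \<subseteq> state_space"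
proof (induction n)
  case 0 then show ?case by (simp add: sd_0 state_space_def)
next
  case (Suc n) then show ?case unfolding dist_Suc by (rule bind_SS)
qed

lemma dist_fin: "finite (set_pmf (sd n))"
proof (induction n)
  case 0 then show ?case by (simp add: sd_0)
next
  case (Suc n) then show ?case unfolding dist_Suc by (simp add: kernel_finite)
qed

lemma E_bind:
  fixes f :: "st \<Rightarrow> real"
  assumes "finite (set_pmf MM)"
  shows "measure_pmf.expectation (bind_pmf MM K) f = measure_pmf.expectation MM (\<lambda>s. measure_pmf.expectation (K s) f)"
proof -
  have "measure_pmf.expectation (bind_pmf MM K) f = (\<Sum>a\<in>set_pmf MM. pmf MM a *\<^sub>R measure_pmf.expectation (K a) f)"
    by (rule pmf_expectation_bind) (use assms kernel_finite in auto)
  also have "\<dots> = measure_pmf.expectation MM (\<lambda>s. measure_pmf.expectation (K s) f)"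
    by (rule integral_measure_pmf[symmetric]) (use assms in \<open>auto simp: set_pmf_eq\<close>)
  finally show ?thesis .
qed

lemma intg: "integrable (measure_pmf (sd n)) (f :: st \<Rightarrow> real)"
  by (rule integrable_measure_pmf_finite[OF dist_fin])

definition "rho = max qb pb"
definition "del (s::st) = real (snd (snd s))"

lemma rho: "0 \<le> rho" "rho < 1" "qb \<le> rho" "pb \<le> rho"
  using pos p0 q0 by (auto simp: rho_def)

lemma drift:
  assumes "s \<in> state_space"
  shows "measure_pmf.expectation (K s) del \<le> rho * del s + 1"
  using assms
proof (cases rule: SS_cases)
  case 1 show ?thesis unfolding 1 EK000 del_def using p1 p0 rho by simp
next
  case 2
  have "q * pf \<le> 1" using q1 q0 pos by (simp add: mult_le_one)
  then show ?thesis unfolding 2 EK110 del_def using rho by simp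
next
  case (3 d)
  show ?thesis
  proof (cases "d < dbar")
    case True
    have "qb * (real d + 1) \<le> rho * real d + 1"
    proof -
      have "qb * real d \<le> rho * real d" using rho by (intro mult_right_mono) auto
      then show ?thesis using q0 by (simp add: algebra_simps)
    qed
    then show ?thesis unfolding 3 EK10lo[OF True] del_def by (simp add: algebra_simps)
  next
    case False
    then have F: "dbar \<le> d" by simp
    have "qb * (pf * (real d + 1)) \<le> qb * (real d + 1)"
      using pos by (intro mult_left_mono) auto
    moreover have "qb * real d \<le> rho * real d" using rho by (intro mult_right_mono) auto
    ultimately have "qb * (pf * (real d + 1)) \<le> rho * real d + 1" using q0 by (simp add: algebra_simps)
    then show ?thesis unfolding 3 EK10hi[OF F] del_def by (simp add: add.commute)
  qed
next
  case (4 d)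
  have "pb * (pf * (real d + 1)) \<le> pb * (real d + 1)"
    using pos by (intro mult_left_mono) auto
  moreover have "pb * real d \<le> rho * real d" using rho by (intro mult_right_mono) auto
  ultimately have "pb * (pf * (real d + 1)) \<le> rho * real d + 1" using p0 by (simp add: algebra_simps)
  then show ?thesis unfolding 4 EK01 del_def by (simp add: add.commute)
qed

lemma del_bound: "measure_pmf.expectation (sd n) del \<le> 1 / (1 - rho)"
proof (induction n)
  case 0 then show ?case using rho by (simp add: sd_0 del_def)
next
  case (Suc n)
  have "measure_pmf.expectation (sd (Suc n)) del = measure_pmf.expectation (sd n) (\<lambda>s. measure_pmf.expectation (K s) del)"
    unfolding dist_Suc by (rule E_bind[OF dist_fin])
  also have "\<dots> \<le> measure_pmf.expectation (sd n) (\<lambda>s. rho * del s + 1)"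
    by (rule integral_mono_AE[OF intg intg], rule AE_pmfI, rule drift) (use dist_SS in blast)
  also have "\<dots> = rho * measure_pmf.expectation (sd n) del + 1"
    using intg[of n del] by simp
  also have "\<dots> \<le> rho * (1 / (1 - rho)) + 1" using Suc rho by (intro add_right_mono mult_left_mono) auto
  also have "\<dots> = 1 / (1 - rho)" using rho by (simp add: field_simps)
  finally show ?case .
qed

end

lemma abs4: "\<bar>(a::real) + b + c - e\<bar> \<le> \<bar>a\<bar> + \<bar>b\<bar> + \<bar>c\<bar> + \<bar>e\<bar>"
proof -
  have "\<bar>a + b + c - e\<bar> \<le> \<bar>a + b + c\<bar> + \<bar>e\<bar>" by (rule abs_triangle_ineq4)
  also have "\<bar>a + b + c\<bar> \<le> \<bar>a + b\<bar> + \<bar>c\<bar>" by (rule abs_triangle_ineq)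
  also have "\<bar>a + b\<bar> \<le> \<bar>a\<bar> + \<bar>b\<bar>" by (rule abs_triangle_ineq)
  finally show ?thesis by simp
qed

lemma linA: "(x::real) = y \<Longrightarrow> y \<le> a + b + c + e \<Longrightarrow> a = a' \<Longrightarrow> c \<le> c' \<Longrightarrow> e = e' \<Longrightarrow> x \<le> a' + b + c' + e'"
  by linarith

lemma linB: "(x::real) \<le> u + B0 + CC + v \<Longrightarrow> MM = a1 + a2 + u + v + w \<Longrightarrow> 0 \<le> a1 \<Longrightarrow> 0 \<le> a2 \<Longrightarrow> 0 \<le> w
   \<Longrightarrow> 0 \<le> hH \<Longrightarrow> 0 \<le> g1 \<Longrightarrow> 0 \<le> g2 \<Longrightarrow> x \<le> hH + g1 + g2 + B0 + CC + MM"
  by linarith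

lemma linC: "(x::real) \<le> a2 + g2 + z + v \<Longrightarrow> z = 0 \<Longrightarrow> MM = a1 + a2 + u + v + w \<Longrightarrow> 0 \<le> a1 \<Longrightarrow> 0 \<le> u \<Longrightarrow> 0 \<le> w
   \<Longrightarrow> 0 \<le> hH \<Longrightarrow> 0 \<le> g1 \<Longrightarrow> 0 \<le> B0 \<Longrightarrow> 0 \<le> CC \<Longrightarrow> x \<le> hH + g1 + g2 + B0 + CC + MM"
  by linarith

lemma linD: "(x::real) \<le> a1 + g1 + z + w \<Longrightarrow> z = 0 \<Longrightarrow> MM = a1 + a2 + u + v + w \<Longrightarrow> 0 \<le> a2 \<Longrightarrow> 0 \<le> u \<Longrightarrow> 0 \<le> v
   \<Longrightarrow> 0 \<le> hH \<Longrightarrow> 0 \<le> g2 \<Longrightarrow> 0 \<le> B0 \<Longrightarrow> 0 \<le> CC \<Longrightarrow> x \<le> hH + g1 + g2 + B0 + CC + MM"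
  by linarith

context M2 begin

definition "M0 = \<bar>H\<bar> + \<bar>ga1\<bar> + \<bar>ga2\<bar> + \<bar>b0\<bar> + \<bar>C\<bar>"
definition "M1 = \<bar>al1\<bar> + \<bar>al2\<bar> + \<bar>be\<bar> / q + \<bar>be\<bar> + \<bar>1 - be\<bar>"

lemma M_nn: "0 \<le> M0" "0 \<le> M1" using q0 by (auto simp: M0_def M1_def)

lemma h2_bound:
  assumes "s \<in> state_space"
  shows "\<bar>h2 s\<bar> \<le> M0 + M1 * del s"
  using assms
proof (cases rule: SS_cases)
  case 1 then show ?thesis using M_nn by (simp add: h2_def h_vals c_vals del_def)
next
  case 2 then show ?thesis using M_nn by (simp add: h2_def h_vals c_vals vals_S del_def M0_def)
next
  case (3 d)
  have dd: "0 \<le> real d" by simp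
  have dist1: "M1 * real d = \<bar>al1\<bar> * real d + \<bar>al2\<bar> * real d + \<bar>be\<bar> / q * real d + \<bar>be\<bar> * real d + \<bar>1 - be\<bar> * real d"
    by (simp add: M1_def algebra_simps)
  have nn: "0 \<le> \<bar>al1\<bar> * real d" "0 \<le> \<bar>al2\<bar> * real d" "0 \<le> \<bar>be\<bar> / q * real d" "0 \<le> \<bar>be\<bar> * real d" "0 \<le> \<bar>1 - be\<bar> * real d"
    using q0 by auto
  show ?thesis
  proof (cases "d < dbar")
    case True
    have eq: "\<bar>h2 s\<bar> = \<bar>be * real d / q + b0 + C * qb ^ (dbar - d) - be * real d\<bar>"
      unfolding 3 h2_def using True by (simp add: h_vals c_vals vals_S Fq_def)
    have t: "\<bar>be * real d / q + b0 + C * qb ^ (dbar - d) - be * real d\<bar> \<le> \<bar>be * real d / q\<bar> + \<bar>b0\<bar> + \<bar>C * qb ^ (dbar - d)\<bar> + \<bar>be * real d\<bar>" by (rule abs4)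
    have e1: "\<bar>be * real d / q\<bar> = \<bar>be\<bar> / q * real d" using q0 by (simp add: abs_mult)
    have c: "\<bar>C * qb ^ (dbar - d)\<bar> \<le> \<bar>C\<bar>"
    proof -
      have "qb ^ (dbar - d) \<le> 1" "0 \<le> qb ^ (dbar - d)" using q0 q1 by (auto intro!: power_le_one)
      then show ?thesis by (simp add: abs_mult mult_left_le)
    qed
    have e2: "\<bar>be * real d\<bar> = \<bar>be\<bar> * real d" by (simp add: abs_mult)
    have X: "\<bar>h2 s\<bar> \<le> \<bar>be\<bar> / q * real d + \<bar>b0\<bar> + \<bar>C\<bar> + \<bar>be\<bar> * real d"
      by (rule linA[OF eq t e1 c e2])
    have ds: "del s = real d" using 3 by (simp add: del_def)
    show ?thesis unfolding ds M0_def by (rule linB[OF X dist1 nn(1,2,5) abs_ge_zero abs_ge_zero abs_ge_zero])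
  next
    case False
    have "\<bar>h2 s\<bar> = \<bar>al2 * real d + ga2 + 0 - be * real d\<bar>"
      unfolding 3 h2_def using False by (simp add: h_vals c_vals vals_S)
    also have "\<dots> \<le> \<bar>al2 * real d\<bar> + \<bar>ga2\<bar> + \<bar>0\<bar> + \<bar>be * real d\<bar>" by (rule abs4)
    also have "\<bar>al2 * real d\<bar> = \<bar>al2\<bar> * real d" by (simp add: abs_mult)
    also have "\<bar>be * real d\<bar> = \<bar>be\<bar> * real d" by (simp add: abs_mult)
    finally have X: "\<bar>h2 s\<bar> \<le> \<bar>al2\<bar> * real d + \<bar>ga2\<bar> + \<bar>0\<bar> + \<bar>be\<bar> * real d" .
    have ds: "del s = real d" using 3 by (simp add: del_def)
    show ?thesis unfolding ds M0_def by (rule linC[OF X abs_zero dist1 nn(1,3,5) abs_ge_zero abs_ge_zero abs_ge_zero abs_ge_zero])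
  qed
next
  case (4 d)
  have dist1: "M1 * real d = \<bar>al1\<bar> * real d + \<bar>al2\<bar> * real d + \<bar>be\<bar> / q * real d + \<bar>be\<bar> * real d + \<bar>1 - be\<bar> * real d"
    by (simp add: M1_def algebra_simps)
  have nn: "0 \<le> \<bar>al1\<bar> * real d" "0 \<le> \<bar>al2\<bar> * real d" "0 \<le> \<bar>be\<bar> / q * real d" "0 \<le> \<bar>be\<bar> * real d" "0 \<le> \<bar>1 - be\<bar> * real d"
    using q0 by auto
  have "\<bar>h2 s\<bar> = \<bar>al1 * real d + ga1 + 0 - (1 - be) * real d\<bar>"
    unfolding 4 h2_def by (simp add: h_vals c_vals vals_S)
  also have "\<dots> \<le> \<bar>al1 * real d\<bar> + \<bar>ga1\<bar> + \<bar>0\<bar> + \<bar>(1 - be) * real d\<bar>" by (rule abs4)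
  also have "\<bar>al1 * real d\<bar> = \<bar>al1\<bar> * real d" by (simp add: abs_mult)
  also have "\<bar>(1 - be) * real d\<bar> = \<bar>1 - be\<bar> * real d" by (simp add: abs_mult)
  finally have X: "\<bar>h2 s\<bar> \<le> \<bar>al1\<bar> * real d + \<bar>ga1\<bar> + \<bar>0\<bar> + \<bar>1 - be\<bar> * real d" .
  have ds: "del s = real d" using 4 by (simp add: del_def)
  show ?thesis unfolding ds M0_def by (rule linD[OF X abs_zero dist1 nn(2,3,4) abs_ge_zero abs_ge_zero abs_ge_zero abs_ge_zero])
qed

abbreviation "r s \<equiv> stage_cost p q ps be lam s (pol s)"

lemma step: "measure_pmf.expectation (sd n) r = g + measure_pmf.expectation (sd n) h2 - measure_pmf.expectation (sd (Suc n)) h2"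
proof -
  have "measure_pmf.expectation (sd n) r = measure_pmf.expectation (sd n) (\<lambda>s. g + h2 s - measure_pmf.expectation (K s) h2)"
    by (rule int_cong_on[OF dist_SS]) (use poisson in \<open>simp add: algebra_simps\<close>)
  also have "\<dots> = g + measure_pmf.expectation (sd n) h2 - measure_pmf.expectation (sd n) (\<lambda>s. measure_pmf.expectation (K s) h2)"
    using intg[of n h2] intg[of n "\<lambda>s. measure_pmf.expectation (K s) h2"] by simp
  also have "measure_pmf.expectation (sd n) (\<lambda>s. measure_pmf.expectation (K s) h2) = measure_pmf.expectation (sd (Suc n)) h2"
    unfolding dist_Suc by (rule E_bind[OF dist_fin, symmetric])
  finally show ?thesis .
qed

lemma tele: "(\<Sum>t = 1..T. measure_pmf.expectation (sd (t - 1)) r) = real T * g - measure_pmf.expectation (sd T) h2"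
proof (induction T)
  case 0 then show ?case by (simp add: sd_0 h2_def h_vals c_vals)
next
  case (Suc T)
  have "(\<Sum>t = 1..Suc T. measure_pmf.expectation (sd (t - 1)) r) = (\<Sum>t = 1..T. measure_pmf.expectation (sd (t - 1)) r) + measure_pmf.expectation (sd T) r"
    by simp
  also have "\<dots> = real (Suc T) * g - measure_pmf.expectation (sd (Suc T)) h2"
    unfolding Suc.IH step[of T] by (simp add: algebra_simps)
  finally show ?case .
qed

definition "Mb = M0 + M1 * (1 / (1 - rho))"

lemma ebound: "\<bar>measure_pmf.expectation (sd T) h2\<bar> \<le> Mb"
proof -
  have "\<bar>measure_pmf.expectation (sd T) h2\<bar> \<le> measure_pmf.expectation (sd T) (\<lambda>s. \<bar>h2 s\<bar>)"
    using integral_norm_bound[of "measure_pmf (sd T)" h2] by simp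
  also have "\<dots> \<le> measure_pmf.expectation (sd T) (\<lambda>s. M0 + M1 * del s)"
    by (rule integral_mono_AE[OF intg intg], rule AE_pmfI, rule h2_bound) (use dist_SS in blast)
  also have "\<dots> = M0 + M1 * measure_pmf.expectation (sd T) del"
    using intg[of T del] by simp
  also have "\<dots> \<le> Mb" unfolding Mb_def using del_bound[of T] M_nn by (intro add_left_mono mult_left_mono) auto
  finally show ?thesis .
qed

lemma avg: "avg_cost p q ps be lam pol = ereal g"
proof -
  define a where "a T = (1 / real T) * (\<Sum>t = 1..T. measure_pmf.expectation (sd (t - 1)) r)" for T
  define e where "e T = measure_pmf.expectation (sd T) h2" for T
  have ev: "eventually (\<lambda>T. g - e T / real T = a T) sequentially"
    using eventually_ge_at_top[of 1]
  proof eventually_elim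
    fix T :: nat assume T: "1 \<le> T"
    show "g - e T / real T = a T" unfolding a_def e_def tele using T by (simp add: field_simps)
  qed
  have "(\<lambda>T. e T / real T) \<longlonglongrightarrow> 0"
  proof (rule Lim_null_comparison)
    show "eventually (\<lambda>T. norm (e T / real T) \<le> Mb / real T) sequentially"
      using ebound by (intro always_eventually allI) (simp add: e_def divide_right_mono)
    show "(\<lambda>T. Mb / real T) \<longlonglongrightarrow> 0" by (rule lim_const_over_n)
  qed
  then have "(\<lambda>T. g - e T / real T) \<longlonglongrightarrow> g - 0" by (intro tendsto_diff tendsto_const)
  then have "a \<longlonglongrightarrow> g" using tendsto_cong[OF ev] by simp
  then have "(\<lambda>T. ereal (a T)) \<longlonglongrightarrow> ereal g" by (rule tendsto_ereal)
  then have "limsup (\<lambda>T. ereal (a T)) = ereal g" by (intro lim_imp_Limsup) auto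
  then show ?thesis unfolding avg_cost_def a_def .
qed

end

theorem lemma2:
  fixes p q ps \<beta> lam :: real and dbar :: nat
  assumes "0 < p" "p < 1" "0 < q" "q < 1" "0 < ps" "ps \<le> 1"
    and "0 \<le> \<beta>" "\<beta> \<le> 1" "0 \<le> lam" and "dbar \<ge> 1"
  defines "pf \<equiv> 1 - ps" and "pb \<equiv> 1 - p" and "qb \<equiv> 1 - q"
  defines "A \<equiv> p * qb ^ (dbar - 1) / (1 - qb * pf)"
  defines "a1 \<equiv> p * (1 - qb ^ (dbar - 1)) / (1 - qb) + A"
  defines "b1 \<equiv> q * pf / (1 - pb * pf)"
  defines "B \<equiv> q / (pb * (1 - pb * pf))"
  defines "D \<equiv> (1 + a1) * pb * B + (1 + b1) * qb * A"
  defines "\<nu>000 \<equiv> pb * B / D" and "\<nu>110 \<equiv> qb * A / D"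
  defines "\<pi> \<equiv> switching_policy dbar 0"
  shows "(\<exists>!\<mu>. is_stationary p q ps \<pi> \<mu>)
    \<and> (\<forall>\<mu>. is_stationary p q ps \<pi> \<mu> \<longrightarrow>
          pmf \<mu> (0,0,0) = \<nu>000 \<and> pmf \<mu> (1,1,0) = \<nu>110
        \<and> (\<forall>k. 1 \<le> k \<and> k \<le> dbar \<longrightarrow> pmf \<mu> (1,0,k) = p * qb ^ (k - 1) * \<nu>000)
        \<and> (\<forall>k. k > dbar \<longrightarrow> pmf \<mu> (1,0,k) = p * qb ^ (dbar - 1) * (qb * pf) ^ (k - dbar) * \<nu>000)
        \<and> (\<forall>k. k \<ge> 1 \<longrightarrow> pmf \<mu> (0,1,k) = q * pf * (pb * pf) ^ (k - 1) * \<nu>110))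
    \<and> avg_cost p q ps \<beta> lam \<pi> = ereal (\<beta> * p * psi pf qb dbar * \<nu>000
        + (1 - \<beta>) * q * pf * \<nu>110 / (1 - pb * pf)^2
        + lam * (A * \<nu>000 + (1 + b1) * \<nu>110))"
proof -
  interpret M2 p q ps dbar \<beta> lam
    by unfold_locales (use assms in auto)
  have eA: "A = cA" by (simp add: A_def cA_def qb_def pf_def)
  have ea1: "a1 = ca1" by (simp add: a1_def ca1_def eA qb_def)
  have eb1: "b1 = cb1" by (simp add: b1_def cb1_def pb_def pf_def)
  have eB: "B = cB" by (simp add: B_def cB_def pb_def pf_def)
  have eD: "D = cD" by (simp add: D_def cD_def ea1 eb1 eB eA pb_def qb_def)
  have e0: "\<nu>000 = n0" by (simp add: \<nu>000_def n0_def eB eD pb_def)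
  have e1: "\<nu>110 = n1" by (simp add: \<nu>110_def n1_def eA eD qb_def)
  have ep: "\<pi> = pol" by (simp add: \<pi>_def)
  have c1: "\<exists>!\<mu>. is_stationary p q ps pol \<mu>"
    unfolding is_stationary_def
  proof (rule ex1I[of _ mu0])
    show "set_pmf mu0 \<subseteq> state_space \<and> bind_pmf mu0 K = mu0" using mu0_SS mu0_stat by simp
  next
    fix \<mu> assume a: "set_pmf \<mu> \<subseteq> state_space \<and> bind_pmf \<mu> K = \<mu>"
    show "\<mu> = mu0"
    proof (rule pmf_eqI)
      fix i show "pmf \<mu> i = pmf mu0 i" using a stat_unique[of \<mu> i] by (simp add: pmf_mu0)
    qed
  qed
  have c2: "\<forall>\<mu>. is_stationary p q ps pol \<mu> \<longrightarrow>
          pmf \<mu> (0,0,0) = n0 \<and> pmf \<mu> (1,1,0) = n1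
        \<and> (\<forall>k. 1 \<le> k \<and> k \<le> dbar \<longrightarrow> pmf \<mu> (1,0,k) = p * (1 - q) ^ (k - 1) * n0)
        \<and> (\<forall>k. k > dbar \<longrightarrow> pmf \<mu> (1,0,k) = p * (1 - q) ^ (dbar - 1) * ((1 - q) * (1 - ps)) ^ (k - dbar) * n0)
        \<and> (\<forall>k. k \<ge> 1 \<longrightarrow> pmf \<mu> (0,1,k) = q * (1 - ps) * ((1 - p) * (1 - ps)) ^ (k - 1) * n1)"
  proof (intro allI impI)
    fix \<mu> assume "is_stationary p q ps pol \<mu>"
    then have st: "set_pmf \<mu> \<subseteq> state_space" "bind_pmf \<mu> K = \<mu>" unfolding is_stationary_def by auto
    have P: "pmf \<mu> s = nu s" for s by (rule stat_unique[OF st])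
    show "pmf \<mu> (0,0,0) = n0 \<and> pmf \<mu> (1,1,0) = n1
        \<and> (\<forall>k. 1 \<le> k \<and> k \<le> dbar \<longrightarrow> pmf \<mu> (1,0,k) = p * (1 - q) ^ (k - 1) * n0)
        \<and> (\<forall>k. k > dbar \<longrightarrow> pmf \<mu> (1,0,k) = p * (1 - q) ^ (dbar - 1) * ((1 - q) * (1 - ps)) ^ (k - dbar) * n0)
        \<and> (\<forall>k. k \<ge> 1 \<longrightarrow> pmf \<mu> (0,1,k) = q * (1 - ps) * ((1 - p) * (1 - ps)) ^ (k - 1) * n1)"
    proof (intro conjI allI impI)
      show "pmf \<mu> (0,0,0) = n0" unfolding P nu_simps ..
      show "pmf \<mu> (1,1,0) = n1" unfolding P nu_simps ..
    next
      fix k :: nat assume k: "1 \<le> k \<and> k \<le> dbar"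
      show "pmf \<mu> (1,0,k) = p * (1 - q) ^ (k - 1) * n0" unfolding P nu_simps(3)[OF conjunct1[OF k]] w_def using k by simp
    next
      fix k :: nat assume k: "dbar < k"
      then have k1: "1 \<le> k" using d1 by simp
      show "pmf \<mu> (1,0,k) = p * (1 - q) ^ (dbar - 1) * ((1 - q) * (1 - ps)) ^ (k - dbar) * n0"
        unfolding P nu_simps(3)[OF k1] w_def using k by (simp add: mult.assoc)
    next
      fix k :: nat assume k: "1 \<le> k"
      show "pmf \<mu> (0,1,k) = q * (1 - ps) * ((1 - p) * (1 - ps)) ^ (k - 1) * n1" unfolding P nu_simps(4)[OF k] ..
    qed
  qed
  have c3: "avg_cost p q ps \<beta> lam pol = ereal (\<beta> * p * psi (1 - ps) (1 - q) dbar * n0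
        + (1 - \<beta>) * q * (1 - ps) * n1 / (1 - (1 - p) * (1 - ps))^2
        + lam * (cA * n0 + (1 + cb1) * n1))"
    unfolding avg g_def ..
  show ?thesis
    unfolding e0 e1 eA eb1 ep pf_def pb_def qb_def using c1 c2 c3 by blast
qed

end
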